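(* Let $M$ be a complex manifold of dimension $n$ and $\varphi\colon\mathbb{C}^*\times M\to M$ a holomorphic action of $\mathbb{C}^*$ with an isolated fixed point at $p\in M$, and suppose $p$ is of the dicritical type. Let $\psi\colon\mathbb{C}^*\times\mathbb{C}^n\to\mathbb{C}^n$ be the action by linear transformations defined by the derivative of $\varphi$ at $p$. Then there are a $\varphi$-invariant open set $A\ni p$ in $M$, a $\psi$-invariant open set $B\ni 0$ in $\mathbb{C}^n$ and a biholomorphism $T\colon A\to B$ such that $$\psi^z\circ T\equiv T\circ\varphi^z\quad\text{for each } z\in\mathbb{C}^*.$$
   Context: A holomorphic action of $\mathbb{C}^*$ on $M$ is a holomorphic map $\varphi\colon\mathbb{C}^*\times M\to M$ with $\varphi(1,x)=x$, $\varphi(zw,x)=\varphi(z,\varphi(w,x))$; write $\varphi^z=\varphi(z,\cdot)$. If $p$ is a fixed point and $\xi\colon W\ni p\to\mathbb{C}^n$ is a local chart, the action by linear transformations defined by the derivative of $\varphi$ at $p$ is $\psi(z,x)=\big[D\xi(p)\cdot D\varphi^z(p)\cdot (D\xi(p))^{-1}\big]\cdot x$ (any other chart gives a linearly conjugate action). This linear holomorphic $\mathbb{C}^*$-action is linearly conjugate to one of the form $\psi^{z}(x)=(z^{\lambda_1}x_1,\dots,z^{\lambda_n}x_n)$ with $\lambda_1,\dots,\lambda_n\in\mathbb{Z}$ (equivalently, writing $z=\exp(2\pi\sqrt{-1}t)$, the flow $(\exp(2\pi\sqrt{-1}\lambda_1 t)x_1,\dots,\exp(2\pi\sqrt{-1}\lambda_n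 t)x_n)$). The fixed point $p$ is said to be of the dicritical type if all $\lambda_j$ are nonzero and have the same sign. *)

theory Defs
  imports "HOL-Analysis.Analysis"
begin

text \<open>Complex n-space is modelled as complex ^ 'n, with n = CARD('n).
A map between open subsets is holomorphic if it is Frechet differentiable at every
point with a complex-linear derivative.\<close>

definition complex_linear :: "(complex^'a \<Rightarrow> complex^'b) \<Rightarrow> bool" where
  "complex_linear L \<longleftrightarrow> linear L \<and> (\<forall>c v. L (c *s v) = c *s L v)"

definition holo :: "(complex^'a) set \<Rightarrow> (complex^'a \<Rightarrow> complex^'b) \<Rightarrow> bool" where
  "holo S f \<longleftrightarrow> open S \<and>
     (\<forall>x\<in>S. \<exists>L. (f has_derivative L) (at x) \<and> (\<forall>c v. L (c *s v) = c *s L v))"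

definition holo2 :: "(complex \<times> (complex^'a)) set \<Rightarrow> (complex \<times> (complex^'a) \<Rightarrow> complex^'b) \<Rightarrow> bool" where
  "holo2 S g \<longleftrightarrow> open S \<and>
     (\<forall>q\<in>S. \<exists>L. (g has_derivative L) (at q) \<and>
        (\<forall>c w v. L (c * w, c *s v) = c *s L (w, v)))"

definition complex_atlas :: "('m::t2_space set \<times> ('m \<Rightarrow> complex^'n)) set \<Rightarrow> bool" where
  "complex_atlas atlas \<longleftrightarrow>
     (\<Union>(fst ` atlas) = UNIV) \<and>
     (\<forall>(U,\<xi>)\<in>atlas. open U \<and> open (\<xi> ` U) \<and> homeomorphism U (\<xi> ` U) \<xi> (inv_into U \<xi>)) \<and>
     (\<forall>(U,\<xi>)\<in>atlas. \<forall>(V,\<eta>)\<in>atlas. holo (\<xi> ` (U \<inter> V)) (\<eta> \<circ> inv_into U \<xi>))"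

definition holomorphic_Cstar_action ::
  "('m::t2_space set \<times> ('m \<Rightarrow> complex^'n)) set \<Rightarrow> (complex \<Rightarrow> 'm \<Rightarrow> 'm) \<Rightarrow> bool" where
  "holomorphic_Cstar_action atlas \<phi> \<longleftrightarrow>
     (\<forall>x. \<phi> 1 x = x) \<and>
     (\<forall>z w x. z \<noteq> 0 \<longrightarrow> w \<noteq> 0 \<longrightarrow> \<phi> (z * w) x = \<phi> z (\<phi> w x)) \<and>
     continuous_on ((-{0}) \<times> (UNIV::'m set)) (\<lambda>(z,x). \<phi> z x) \<and>
     (\<forall>(U,\<xi>)\<in>atlas. \<forall>(V,\<eta>)\<in>atlas.
        holo2 {(z,y). z \<noteq> 0 \<and> y \<in> \<xi> ` U \<and> \<phi> z (inv_into U \<xi> y) \<in> V}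
              (\<lambda>(z,y). \<eta> (\<phi> z (inv_into U \<xi> y))))"

definition holo_from_mfd ::
  "('m::t2_space set \<times> ('m \<Rightarrow> complex^'n)) set \<Rightarrow> 'm set \<Rightarrow> ('m \<Rightarrow> complex^'k) \<Rightarrow> bool" where
  "holo_from_mfd atlas A T \<longleftrightarrow> open A \<and>
     (\<forall>(U,\<xi>)\<in>atlas. holo (\<xi> ` (U \<inter> A)) (T \<circ> inv_into U \<xi>))"

definition holo_to_mfd ::
  "('m::t2_space set \<times> ('m \<Rightarrow> complex^'n)) set \<Rightarrow> (complex^'k) set \<Rightarrow> (complex^'k \<Rightarrow> 'm) \<Rightarrow> bool" where
  "holo_to_mfd atlas B S \<longleftrightarrow> open B \<and> continuous_on B S \<and>
     (\<forall>(U,\<xi>)\<in>atlas. holo (B \<inter> S -` U) (\<xi> \<circ> S))"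

definition biholomorphism ::
  "('m::t2_space set \<times> ('m \<Rightarrow> complex^'n)) set \<Rightarrow> 'm set \<Rightarrow> (complex^'n) set \<Rightarrow> ('m \<Rightarrow> complex^'n) \<Rightarrow> bool" where
  "biholomorphism atlas A B T \<longleftrightarrow>
     bij_betw T A B \<and> holo_from_mfd atlas A T \<and> holo_to_mfd atlas B (inv_into A T)"

text \<open>Linear action by the derivative of phi at the fixed point p, computed in the chart (U, xi):
psi z = D(xi o phi z o xi^-1)(xi p) = D xi(p) . D phi^z(p) . (D xi(p))^-1.\<close>
definition derivative_action ::
  "('m \<Rightarrow> complex^'n) \<Rightarrow> 'm set \<Rightarrow> (complex \<Rightarrow> 'm \<Rightarrow> 'm) \<Rightarrow> 'm \<Rightarrow> complex \<Rightarrow> complex^'n \<Rightarrow> complex^'n" where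
  "derivative_action \<xi> U \<phi> p z =
     frechet_derivative (\<xi> \<circ> \<phi> z \<circ> inv_into U \<xi>) (at (\<xi> p))"

definition dicritical :: "(complex \<Rightarrow> complex^'n \<Rightarrow> complex^'n) \<Rightarrow> bool" where
  "dicritical \<psi> \<longleftrightarrow>
     (\<exists>P (lam::'n \<Rightarrow> int). complex_linear P \<and> bij P \<and>
        ((\<forall>j. lam j > 0) \<or> (\<forall>j. lam j < 0)) \<and>
        (\<forall>z v. z \<noteq> 0 \<longrightarrow> \<psi> z (P v) = P (\<chi> j. z powi (lam j) * v $ j)))"

end

theory Submission
  imports Defs "HOL-Complex_Analysis.Complex_Analysis"
begin


lemma norm_smult_cvec: "norm (c *s (v::complex^'n)) = norm c * norm v"
  unfolding norm_vec_def
  by (simp add: L2_set_right_distrib norm_mult)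

lemma holo2_partial_y:
  assumes "holo2 D g" "(z,y) \<in> D"
  shows "\<exists>L. ((\<lambda>y. g (z,y)) has_derivative L) (at y) \<and> (\<forall>c v. L (c *s v) = c *s L v)"
proof -
  obtain L where L: "(g has_derivative L) (at (z,y))" "\<forall>c w v. L (c * w, c *s v) = c *s L (w, v)"
    using assms unfolding holo2_def by blast
  have "((\<lambda>y. (z,y)) has_derivative (\<lambda>v. (0,v))) (at y)"
    by (rule has_derivative_Pair[OF has_derivative_const has_derivative_ident])
  from diff_chain_at[OF this L(1)] have "((\<lambda>y. g (z,y)) has_derivative (\<lambda>v. L (0,v))) (at y)"
    by (simp add: o_def)
  moreover have "\<forall>c v. L (0, c *s v) = c *s L (0,v)"
  proof (intro allI)
    fix c v show "L (0, c *s v) = c *s L (0,v)" using L(2)[rule_format, of c 0 v] by simp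
  qed
  ultimately show ?thesis by (intro exI[where x="\<lambda>v. L (0,v)"] conjI)
qed

lemma holo2_partial_z:
  assumes "holo2 D g" "(z,y) \<in> D"
  shows "\<exists>a. ((\<lambda>w. g (w,y)) has_derivative (\<lambda>h. h *s a)) (at z)"
proof -
  obtain L where L: "(g has_derivative L) (at (z,y))" "\<forall>c w v. L (c * w, c *s v) = c *s L (w, v)"
    using assms unfolding holo2_def by blast
  have "((\<lambda>w. (w,y)) has_derivative (\<lambda>h. (h,0))) (at z)"
    by (rule has_derivative_Pair[OF has_derivative_ident has_derivative_const])
  from diff_chain_at[OF this L(1)] have *: "((\<lambda>w. g (w,y)) has_derivative (\<lambda>h. L (h,0))) (at z)"
    by (simp add: o_def)
  have "L (h,0) = h *s L (1,0)" for h
  proof -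
    have "h *s (0::complex^'b) = 0" by (simp add: vec_eq_iff)
    then show ?thesis using L(2)[rule_format, of h 1 0] by simp
  qed
  then have "(\<lambda>h. L (h,0)) = (\<lambda>h. h *s L (1,0))" by (rule ext)
  with * show ?thesis by (intro exI[where x="L (1,0)"]) simp
qed


definition pdy :: "(complex \<times> (complex^'a) \<Rightarrow> complex^'b) \<Rightarrow> complex \<Rightarrow> complex^'a \<Rightarrow> complex^'a \<Rightarrow> complex^'b" where
  "pdy g z y = frechet_derivative (\<lambda>y. g (z,y)) (at y)"

lemma pdy_has:
  assumes "holo2 D g" "(z,y) \<in> D"
  shows "((\<lambda>y. g (z,y)) has_derivative pdy g z y) (at y)"
    and "pdy g z y (c *s v) = c *s pdy g z y v"
proof -
  obtain L where L: "((\<lambda>y. g (z,y)) has_derivative L) (at y)" "\<forall>c v. L (c *s v) = c *s L v"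
    using holo2_partial_y[OF assms] by blast
  have "L = pdy g z y" unfolding pdy_def by (rule frechet_derivative_at[OF L(1)])
  then show "((\<lambda>y. g (z,y)) has_derivative pdy g z y) (at y)"
    and "pdy g z y (c *s v) = c *s pdy g z y v" using L by auto
qed

lemma bounded_linear_smult_left: "bounded_linear (\<lambda>u::complex. u *s (v::complex^'n))"
proof -
  have "linear (\<lambda>u::complex. u *s (v::complex^'n))"
    by (rule linearI) (auto simp: vec_eq_iff algebra_simps)
  then show ?thesis by (simp add: linear_conv_bounded_linear)
qed

lemma line_deriv:
  assumes "holo2 D g" "(z, y + u *s v) \<in> D"
  shows "((\<lambda>u. g (z, y + u *s v) $ j) has_field_derivative (pdy g z (y + u *s v) v $ j)) (at u)"
proof -
  have d1: "((\<lambda>u. y + u *s v) has_derivative (\<lambda>h. h *s v)) (at u)"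
    using bounded_linear_smult_left[of v]
    by (auto intro!: derivative_eq_intros bounded_linear.has_derivative[where f="\<lambda>u. u *s v"])
  have d2: "((\<lambda>w. g (z, w)) has_derivative pdy g z (y + u *s v)) (at (y + u *s v))"
    by (rule pdy_has(1)[OF assms])
  from diff_chain_at[OF d1 d2]
  have "((\<lambda>u. g (z, y + u *s v)) has_derivative (\<lambda>h. pdy g z (y + u *s v) (h *s v))) (at u)"
    by (simp add: o_def)
  from bounded_linear.has_derivative[OF bounded_linear_vec_nth[of j] this]
  have "((\<lambda>u. g (z, y + u *s v) $ j) has_derivative (\<lambda>h. pdy g z (y + u *s v) (h *s v) $ j)) (at u)" .
  moreover have "(\<lambda>h. pdy g z (y + u *s v) (h *s v) $ j) = (\<lambda>h. (pdy g z (y + u *s v) v $ j) * h)"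
    by (rule ext) (simp add: pdy_has(2)[OF assms] mult.commute)
  ultimately show ?thesis unfolding has_field_derivative_def by simp
qed

lemma holo2_continuous: "holo2 D g \<Longrightarrow> continuous_on D g"
  unfolding holo2_def
  by (metis continuous_at_imp_continuous_on has_derivative_continuous)


lemma dist_shift_pair:
  fixes z :: complex and y v :: "complex^'n"
  shows "dist (z, y + u *s v) (z, y) = norm u * norm v"
  by (simp add: dist_Pair_Pair dist_norm norm_smult_cvec)

lemma pdy_cont_comp:
  assumes hg: "holo2 D g" and q0: "q0 \<in> D"
  shows "isCont (\<lambda>q. pdy g (fst q) (snd q) v $ j) q0"
proof (cases "v = 0")
  case True
  have "pdy g (fst q) (snd q) 0 = 0" if "q \<in> D" for q
    using pdy_has(2)[OF hg, of "fst q" "snd q" 0 0] that by simp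
  then have ev: "\<forall>\<^sub>F q in nhds q0. pdy g (fst q) (snd q) v $ j = 0"
    using True hg q0 unfolding holo2_def by (auto simp: eventually_nhds)
  have "pdy g (fst q0) (snd q0) v $ j = 0" using ev unfolding eventually_nhds by blast
  moreover have "isCont (\<lambda>q. 0::complex) q0" by simp
  ultimately show ?thesis using isCont_cong[OF ev] by simp
next
  case False
  have oD: "open D" using hg unfolding holo2_def by simp
  obtain R where R: "R > 0" "ball q0 R \<subseteq> D" using oD q0 open_contains_ball by blast
  define r where "r = R / (2 * norm v)"
  have r: "r > 0" using R False by (simp add: r_def)
  define N where "N = ball q0 (R/2)"
  have inD: "(fst q, snd q + u *s v) \<in> D" if "q \<in> N" "norm u \<le> r" for q u
  proof -
    have "dist (fst q, snd q + u *s v) q \<le> R/2"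
      using dist_shift_pair[of "fst q" "snd q" u v] that False
      by (simp add: r_def field_simps mult_right_mono)
    moreover have "dist q q0 < R/2" using that by (simp add: N_def dist_commute)
    ultimately have "dist (fst q, snd q + u *s v) q0 < R"
      using dist_triangle[of "(fst q, snd q + u *s v)" q0 q] by linarith
    then show ?thesis using R by (auto simp: dist_commute)
  qed
  define f where "f = (\<lambda>q u. g (fst q, snd q + u *s v) $ j)"
  have fder: "(f q has_field_derivative (pdy g (fst q) (snd q + u *s v) v $ j)) (at u)"
    if "q \<in> N" "norm u \<le> r" for q u
    unfolding f_def using line_deriv[OF hg inD[OF that]] .
  have fcont: "continuous_on (cball 0 r) (f q)" if "q \<in> N" for q
  proof (rule continuous_at_imp_continuous_on, intro ballI)
    fix u :: complex assume "u \<in> cball 0 r"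
    then show "isCont (f q) u" using DERIV_isCont[OF fder[OF that, of u]] by simp
  qed
  have fhol: "f q holomorphic_on ball 0 r" if "q \<in> N" for q
    unfolding holomorphic_on_def field_differentiable_def
  proof
    fix u assume "u \<in> ball (0::complex) r"
    then have "norm u \<le> r" by simp
    from has_field_derivative_at_within[OF fder[OF that this]]
    show "\<exists>f'. (f q has_field_derivative f') (at u within ball 0 r)" by blast
  qed
  have rep: "pdy g (fst q) (snd q) v $ j =
      1 / (2 * of_real pi * \<i>) * contour_integral (circlepath 0 r) (\<lambda>u. f q u / (u - 0)^2)"
    if "q \<in> N" for q
  proof -
    have "(f q has_field_derivative (1 / (2 * of_real pi * \<i>) *
           contour_integral (circlepath 0 r) (\<lambda>u. f q u / (u - 0)^2))) (at 0)"
      by (rule Cauchy_derivative_integral_circlepath(2)[OF fcont[OF that] fhol[OF that]]) (use r in simp)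
    moreover have "(f q has_field_derivative (pdy g (fst q) (snd q) v $ j)) (at 0)"
      using fder[OF that, of 0] r by simp
    ultimately show ?thesis by (metis DERIV_unique)
  qed
  have integ: "(\<lambda>u. f q u / (u - 0)^2) contour_integrable_on (circlepath 0 r)" if "q \<in> N" for q
    by (rule Cauchy_derivative_integral_circlepath(1)[OF fcont[OF that] fhol[OF that]]) (use r in simp)
  have q0N: "q0 \<in> N" using R by (simp add: N_def)
  have evN: "\<forall>\<^sub>F q in at q0. q \<in> N"
    unfolding N_def by (rule eventually_at_in_open') (use R in auto)
  have gc: "continuous_on D g" by (rule holo2_continuous[OF hg])
  have cont2: "continuous_on (N \<times> sphere 0 r) (\<lambda>(q,u). f q u / (u - 0)^2)"
  proof -
    have c1: "continuous_on (N \<times> sphere 0 r) (\<lambda>(q,u). (fst q, snd q + u *s v))"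
      by (auto simp: split_beta intro!: continuous_intros bounded_linear.continuous_on[OF bounded_linear_smult_left])
    have "continuous_on (N \<times> sphere 0 r) (\<lambda>(q,u). g (fst q, snd q + u *s v))"
    proof -
      have "(\<lambda>(q,u). (fst q, snd q + u *s v)) ` (N \<times> sphere 0 r) \<subseteq> D"
        using inD by auto
      from continuous_on_compose2[OF gc c1 this] show ?thesis by (simp add: split_beta)
    qed
    then have "continuous_on (N \<times> sphere 0 r) (\<lambda>(q,u). g (fst q, snd q + u *s v) $ j)"
      by (auto simp: split_beta intro!: continuous_intros)
    then show ?thesis unfolding f_def
      using r by (auto simp: split_beta intro!: continuous_intros)
  qed
  have ul: "uniform_limit (sphere 0 r) (\<lambda>q u. f q u / (u - 0)^2) (\<lambda>u. f q0 u / (u - 0)^2) (at q0)"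
  proof (rule uniform_limitI)
    fix e :: real assume e: "e > 0"
    obtain X0 where X0: "q0 \<in> X0" "open X0"
      "\<forall>x\<in>X0 \<inter> N. \<forall>t\<in>sphere 0 r. dist ((\<lambda>(q,u). f q u / (u - 0)^2) (x, t)) ((\<lambda>(q,u). f q u / (u - 0)^2) (q0, t)) \<le> e/2"
      using continuous_on_prod_compactE[OF cont2 compact_sphere q0N, of "e/2"] e by auto
    have "\<forall>\<^sub>F q in at q0. q \<in> X0" using X0 eventually_at_in_open' by blast
    with evN show "\<forall>\<^sub>F q in at q0. \<forall>u\<in>sphere 0 r. dist (f q u / (u - 0)^2) (f q0 u / (u - 0)^2) < e"
    proof eventually_elim
      case (elim q)
      show ?case
      proof
        fix u :: complex assume "u \<in> sphere 0 r"
        then have "dist (f q u / (u - 0)^2) (f q0 u / (u - 0)^2) \<le> e/2"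
          using X0(3) elim by auto
        then show "dist (f q u / (u - 0)^2) (f q0 u / (u - 0)^2) < e" using e by linarith
      qed
    qed
  qed
  have atnb: "at q0 \<noteq> bot" by (rule at_neq_bot)
  have lim: "((\<lambda>q. contour_integral (circlepath 0 r) (\<lambda>u. f q u / (u - 0)^2)) \<longlongrightarrow>
             contour_integral (circlepath 0 r) (\<lambda>u. f q0 u / (u - 0)^2)) (at q0)"
    by (rule contour_integral_uniform_limit_circlepath(2)[OF eventually_mono[OF evN integ] ul atnb r]) simp
  have "((\<lambda>q. 1 / (2 * of_real pi * \<i>) * contour_integral (circlepath 0 r) (\<lambda>u. f q u / (u - 0)^2)) \<longlongrightarrow>
         1 / (2 * of_real pi * \<i>) * contour_integral (circlepath 0 r) (\<lambda>u. f q0 u / (u - 0)^2)) (at q0)"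
    by (intro tendsto_intros lim)
  note lim2 = this
  have "((\<lambda>q. pdy g (fst q) (snd q) v $ j) \<longlongrightarrow> pdy g (fst q0) (snd q0) v $ j) (at q0)"
  proof -
    have "\<forall>\<^sub>F q in at q0. 1 / (2 * of_real pi * \<i>) * contour_integral (circlepath 0 r) (\<lambda>u. f q u / (u - 0)^2)
            = pdy g (fst q) (snd q) v $ j"
      using evN by eventually_elim (simp add: rep)
    from Lim_transform_eventually[OF lim2 this] show ?thesis by (simp add: rep[OF q0N])
  qed
  then show ?thesis unfolding isCont_def .
qed

lemma pdy_cont:
  assumes hg: "holo2 D g"
  shows "continuous_on D (\<lambda>q. pdy g (fst q) (snd q) v)"
proof -
  have oD: "open D" using hg unfolding holo2_def by simp
  have "continuous_on D (\<lambda>q. \<chi> j. pdy g (fst q) (snd q) v $ j)"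
    by (intro continuous_on_vec_lambda continuous_at_imp_continuous_on ballI pdy_cont_comp[OF hg])
  then show ?thesis by simp
qed



lemma tube_swap:
  fixes W :: "('a::metric_space \<times> 'b::metric_space) set"
  assumes "compact K" "open W" "K \<times> {y0} \<subseteq> W"
  shows "\<exists>d>0. K \<times> ball y0 d \<subseteq> W"
proof -
  define W' where "W' = (\<lambda>q. (snd q, fst q)) -` W"
  have "open W'" unfolding W'_def
    by (rule continuous_open_vimage[OF assms(2)]) (intro continuous_intros)
  moreover have "{y0} \<times> K \<subseteq> W'" using assms(3) by (auto simp: W'_def)
  ultimately obtain X0 where X0: "y0 \<in> X0" "open X0" "X0 \<times> K \<subseteq> W'"
    using Elementary_Topology.tube_lemma[OF assms(1)] by metis
  obtain d where d: "d > 0" "ball y0 d \<subseteq> X0" using X0 open_contains_ball by blast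
  have "K \<times> ball y0 d \<subseteq> W"
  proof safe
    fix a b assume "a \<in> K" "b \<in> ball y0 d"
    then have "(b,a) \<in> X0 \<times> K" using d by auto
    then show "(a,b) \<in> W" using X0(3) unfolding W'_def by auto
  qed
  with d show ?thesis by blast
qed

definition ee :: "real \<Rightarrow> complex" where "ee t = exp (2 * of_real pi * \<i> * of_real t)"

lemma ee_nz[simp]: "ee t \<noteq> 0" by (simp add: ee_def)
lemma ee_norm[simp]: "norm (ee t) = 1" by (simp add: ee_def norm_exp_eq_Re)
lemma ee_add: "ee (s + t) = ee s * ee t" by (simp add: ee_def distrib_left exp_add)
lemma ee_minus: "ee (-t) * ee t = 1" by (simp add: ee_def exp_minus)
lemma ee_0[simp]: "ee 0 = 1" by (simp add: ee_def)
lemma ee_1[simp]: "ee 1 = 1" by (simp add: ee_def)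
lemma ee_cont[continuous_intros]: "continuous_on S f \<Longrightarrow> continuous_on S (\<lambda>x. ee (f x))"
  unfolding ee_def by (intro continuous_intros)
lemma ee_sphere[simp]: "ee t \<in> sphere 0 1" by simp


lemma periodic_integral:
  fixes f :: "real \<Rightarrow> 'b::euclidean_space"
  assumes cont: "continuous_on UNIV f" and per: "\<And>t. f (t + 1) = f t" and s: "0 \<le> s" "s \<le> 1"
  shows "integral {0..1} (\<lambda>t. f (t + s)) = integral {0..1} f"
proof -
  have int: "f integrable_on {a..b}" for a b
    by (rule integrable_continuous_interval) (rule continuous_on_subset[OF cont], simp)
  have "integral {0..1} (\<lambda>t. f (t + s)) = integral {s..1+s} f"
    using integral_shift_real_ivl[where f=f and a=s and b="1+s" and c=s] by simp
  also have "\<dots> = integral {s..1} f + integral {1..1+s} f"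
    using Henstock_Kurzweil_Integration.integral_combine[where f=f and a=s and c=1 and b="1+s"] s int by simp
  also have "integral {1..1+s} f = integral {0..s} f"
  proof -
    have "integral {1-1..1+s-1} (\<lambda>x. f (x + 1)) = integral {1..1+s} f"
      by (rule integral_shift_real_ivl)
    then show ?thesis using per by simp
  qed
  also have "integral {s..1} f + integral {0..s} f = integral {0..1} f"
    using Henstock_Kurzweil_Integration.integral_combine[where f=f and a=0 and c=s and b=1] s int by (simp add: add.commute)
  finally show ?thesis .
qed

lemma ee_per: "ee (t + 1) = ee t" by (simp add: ee_add)
lemma ee_per': "ee (t - 1) = ee t" by (metis diff_add_cancel ee_per)


definition vhol :: "(complex \<Rightarrow> complex^'n) \<Rightarrow> complex set \<Rightarrow> bool" where
  "vhol F S \<longleftrightarrow> (\<forall>w\<in>S. \<exists>a. (F has_derivative (\<lambda>h. h *s a)) (at w))"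

lemma vhol_comp:
  fixes F :: "complex \<Rightarrow> complex^'n"
  assumes "vhol F S" shows "(\<lambda>w. F w $ j) holomorphic_on S"
  unfolding holomorphic_on_def
proof
  fix w assume "w \<in> S"
  then obtain a where a: "(F has_derivative (\<lambda>h. h *s a)) (at w)" using assms vhol_def by blast
  from bounded_linear.has_derivative[OF bounded_linear_vec_nth[of j] a]
  have "((\<lambda>w. F w $ j) has_derivative (\<lambda>h. (h *s a) $ j)) (at w)" .
  moreover have "(\<lambda>h. (h *s a) $ j) = (*) (a $ j)" by (auto simp: mult.commute)
  ultimately have "((\<lambda>w. F w $ j) has_field_derivative (a $ j)) (at w)"
    by (simp add: has_field_derivative_def)
  then show "(\<lambda>w. F w $ j) field_differentiable at w within S"
    using field_differentiable_at_within field_differentiable_def by blast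
qed

lemma scal_deriv:
  assumes "(f has_field_derivative f') (at w)"
  shows "((\<lambda>w. f w *s (e::complex^'n)) has_derivative (\<lambda>h. h *s (f' *s e))) (at w)"
proof -
  have "(f has_derivative (\<lambda>h. f' * h)) (at w)" using assms by (simp add: has_field_derivative_def)
  from bounded_linear.has_derivative[OF bounded_linear_smult_left[of e] this]
  have "((\<lambda>w. f w *s e) has_derivative (\<lambda>h. (f' * h) *s e)) (at w)" .
  moreover have "(\<lambda>h. (f' * h) *s e) = (\<lambda>h. h *s (f' *s e))"
    by (auto simp: vector_smult_assoc mult.commute)
  ultimately show ?thesis by simp
qed


locale lin_setup =
  fixes atlas :: "('m::t2_space set \<times> ('m \<Rightarrow> complex^'n)) set"
    and \<phi> :: "complex \<Rightarrow> 'm \<Rightarrow> 'm" and p :: 'm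
    and U :: "'m set" and \<xi> :: "'m \<Rightarrow> complex^'n"
    and P :: "complex^'n \<Rightarrow> complex^'n" and lam :: "'n \<Rightarrow> int" and pos :: bool
  assumes atlas: "complex_atlas atlas"
    and action: "holomorphic_Cstar_action atlas \<phi>"
    and fixed: "\<And>z. z \<noteq> 0 \<Longrightarrow> \<phi> z p = p"
    and chart: "(U, \<xi>) \<in> atlas" "p \<in> U"
    and Plin: "complex_linear P" and Pbij: "bij P"
    and lam_pos: "pos \<Longrightarrow> lam j > 0"
    and lam_neg: "\<not> pos \<Longrightarrow> lam j < 0"
    and psiP: "\<And>z v. z \<noteq> 0 \<Longrightarrow> derivative_action \<xi> U \<phi> p z (P v) = P (\<chi> j. z powi (lam j) * v $ j)"
begin

abbreviation "\<psi> \<equiv> derivative_action \<xi> U \<phi> p"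
definition "Pinv = inv P"
definition "c = \<xi> p"
definition "G = (\<lambda>(z,y). \<xi> (\<phi> z (inv_into U \<xi> y)))"
definition "D = {(z,y). z \<noteq> 0 \<and> y \<in> \<xi> ` U \<and> \<phi> z (inv_into U \<xi> y) \<in> U}"

lemma chart_props: "open U" "open (\<xi> ` U)" "homeomorphism U (\<xi> ` U) \<xi> (inv_into U \<xi>)"
  using atlas chart(1) unfolding complex_atlas_def by auto

lemma inv_xi[simp]: "x \<in> U \<Longrightarrow> inv_into U \<xi> (\<xi> x) = x"
  using chart_props(3) by (simp add: homeomorphism_def)

lemma xi_inv[simp]: "y \<in> \<xi> ` U \<Longrightarrow> \<xi> (inv_into U \<xi> y) = y"
  by (rule f_inv_into_f)

lemma inv_in: "y \<in> \<xi> ` U \<Longrightarrow> inv_into U \<xi> y \<in> U"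
  by (simp add: inv_into_into)

lemma act1: "\<phi> 1 x = x"
  using action unfolding holomorphic_Cstar_action_def by auto

lemma actm: "z \<noteq> 0 \<Longrightarrow> w \<noteq> 0 \<Longrightarrow> \<phi> (z * w) x = \<phi> z (\<phi> w x)"
  using action unfolding holomorphic_Cstar_action_def by auto

lemma act_cont: "continuous_on ((-{0}) \<times> (UNIV::'m set)) (\<lambda>(z,x). \<phi> z x)"
  using action unfolding holomorphic_Cstar_action_def by auto

lemma holo2_charts:
  assumes "(U1, \<xi>1) \<in> atlas" "(V, \<eta>) \<in> atlas"
  shows "holo2 {(z,y). z \<noteq> 0 \<and> y \<in> \<xi>1 ` U1 \<and> \<phi> z (inv_into U1 \<xi>1 y) \<in> V}
              (\<lambda>(z,y). \<eta> (\<phi> z (inv_into U1 \<xi>1 y)))"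
  using action assms unfolding holomorphic_Cstar_action_def by blast

lemma holoG: "holo2 D G"
  unfolding D_def G_def using holo2_charts[OF chart(1) chart(1)] .

lemma openD: "open D" using holoG unfolding holo2_def by simp

lemma c_in: "c \<in> \<xi> ` U" using chart(2) by (simp add: c_def)

lemma Dc: "z \<noteq> 0 \<Longrightarrow> (z, c) \<in> D"
  using chart(2) fixed by (simp add: D_def c_def)

lemma Gc: "z \<noteq> 0 \<Longrightarrow> G (z, c) = c"
  using chart(2) fixed by (simp add: G_def c_def)

lemma pdy_c: "z \<noteq> 0 \<Longrightarrow> pdy G z c = \<psi> z"
  unfolding pdy_def derivative_action_def c_def G_def by (simp add: o_def)

lemma D_mult:
  assumes "(w, y) \<in> D" "(z, G (w,y)) \<in> D"
  shows "(z * w, y) \<in> D" "G (z, G (w, y)) = G (z * w, y)"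
proof -
  have w: "w \<noteq> 0" "y \<in> \<xi> ` U" "\<phi> w (inv_into U \<xi> y) \<in> U" using assms(1) by (auto simp: D_def)
  have z: "z \<noteq> 0" using assms(2) by (auto simp: D_def)
  have i: "inv_into U \<xi> (G (w,y)) = \<phi> w (inv_into U \<xi> y)" using w by (simp add: G_def)
  show "(z * w, y) \<in> D" using assms(2) w z i by (simp add: D_def actm)
  show "G (z, G (w, y)) = G (z * w, y)" using i w z by (simp add: G_def actm)
qed

lemma G_in: "(z, y) \<in> D \<Longrightarrow> G (z, y) \<in> \<xi> ` U"
  by (auto simp: D_def G_def)


lemma Plinear: "linear P" using Plin unfolding complex_linear_def by simp
lemma Pcx: "P (a *s v) = a *s P v" using Plin unfolding complex_linear_def by simp
lemma P_Pinv[simp]: "P (Pinv u) = u" unfolding Pinv_def using Pbij by (simp add: bij_is_surj surj_f_inv_f)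
lemma Pinv_P[simp]: "Pinv (P u) = u" unfolding Pinv_def using Pbij by (simp add: bij_is_inj inv_f_f)
lemma Pinv_linear: "linear Pinv"
  unfolding Pinv_def by (rule inj_linear_imp_inv_linear[OF Plinear bij_is_inj[OF Pbij]])
lemma Pinv_cx: "Pinv (a *s u) = a *s Pinv u"
proof -
  have "P (a *s Pinv u) = a *s u" by (simp add: Pcx)
  then show ?thesis by (metis Pinv_P)
qed
lemma P_bl: "bounded_linear P" using Plinear by (simp add: linear_conv_bounded_linear)
lemma Pinv_bl: "bounded_linear Pinv" using Pinv_linear by (simp add: linear_conv_bounded_linear)

definition dg :: "complex \<Rightarrow> complex^'n \<Rightarrow> complex^'n" where
  "dg z v = (\<chi> j. z powi (lam j) * v $ j)"

lemma psi_formula: "z \<noteq> 0 \<Longrightarrow> \<psi> z u = P (dg z (Pinv u))"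
  using psiP[of z "Pinv u"] by (simp add: dg_def)

lemma dg_mult: "z \<noteq> 0 \<Longrightarrow> w \<noteq> 0 \<Longrightarrow> dg z (dg w v) = dg (z * w) v"
  by (simp add: dg_def vec_eq_iff power_int_mult_distrib mult.assoc mult.commute mult.left_commute)

lemma dg_1: "dg 1 v = v" by (simp add: dg_def vec_eq_iff)

lemma psi_mult: "z \<noteq> 0 \<Longrightarrow> w \<noteq> 0 \<Longrightarrow> \<psi> z (\<psi> w u) = \<psi> (z * w) u"
  by (simp add: psi_formula dg_mult)

lemma psi_1: "\<psi> 1 u = u" by (simp add: psi_formula dg_1)

lemma dg_linear: "linear (dg z)"
  by (rule linearI) (auto simp: dg_def vec_eq_iff algebra_simps)

lemma psi_linear: "z \<noteq> 0 \<Longrightarrow> linear (\<psi> z)"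
proof -
  assume z: "z \<noteq> 0"
  have "linear (P \<circ> dg z \<circ> Pinv)"
    by (intro linear_compose Plinear dg_linear Pinv_linear)
  moreover have "\<psi> z = P \<circ> dg z \<circ> Pinv" by (rule ext) (simp add: psi_formula z)
  ultimately show ?thesis by simp
qed

lemma psi_bl: "z \<noteq> 0 \<Longrightarrow> bounded_linear (\<psi> z)"
  using psi_linear by (simp add: linear_conv_bounded_linear)

lemma psi_0[simp]: "z \<noteq> 0 \<Longrightarrow> \<psi> z 0 = 0"
  using linear_0[OF psi_linear] by simp

lemma psi_cx: "z \<noteq> 0 \<Longrightarrow> \<psi> z (a *s u) = a *s \<psi> z u"
proof -
  assume z: "z \<noteq> 0"
  have "dg z (Pinv (a *s u)) = a *s dg z (Pinv u)"
    by (simp add: Pinv_cx dg_def vec_eq_iff mult.left_commute)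
  then show ?thesis by (simp add: psi_formula z Pcx)
qed

lemma psi_cont: "continuous_on ((-{0}) \<times> UNIV) (\<lambda>(z,u). \<psi> z u)"
proof -
  have "continuous_on ((-{0}) \<times> UNIV) (\<lambda>(z,u). P (dg z (Pinv u)))"
    unfolding dg_def split_beta
    by (intro continuous_intros linear_continuous_on P_bl Pinv_bl continuous_on_compose2[OF linear_continuous_on[OF P_bl]]
          continuous_on_compose2[OF linear_continuous_on[OF Pinv_bl]] continuous_on_vec_lambda) auto
  then show ?thesis
  proof (rule continuous_on_eq)
    fix x :: "complex \<times> (complex^'n)" assume "x \<in> (-{0}) \<times> UNIV"
    then have "fst x \<noteq> 0" by auto
    then show "(\<lambda>(z,u). P (dg z (Pinv u))) x = (\<lambda>(z,u). \<psi> z u) x"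
      by (simp add: split_beta psi_formula)
  qed
qed

lemma psi_comp_cont:
  assumes "continuous_on S f" "continuous_on S g" "\<And>x. x \<in> S \<Longrightarrow> f x \<noteq> 0"
  shows "continuous_on S (\<lambda>x. \<psi> (f x) (g x))"
proof -
  have "continuous_on S (\<lambda>x. (\<lambda>(z,u). \<psi> z u) (f x, g x))"
    by (rule continuous_on_compose2[OF psi_cont]) (use assms in \<open>auto intro!: continuous_intros\<close>)
  then show ?thesis by simp
qed


lemma G_cont: "continuous_on D G" by (rule holo2_continuous[OF holoG])

definition "\<delta> = (SOME d. d > 0 \<and> sphere 0 1 \<times> ball c d \<subseteq> D)"

lemma delta: "\<delta> > 0" "sphere 0 1 \<times> ball c \<delta> \<subseteq> D"
proof -
  have "\<exists>d>0. sphere 0 1 \<times> ball c d \<subseteq> D"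
    by (rule tube_swap[OF compact_sphere openD]) (auto intro!: Dc)
  then have "\<delta> > 0 \<and> sphere 0 1 \<times> ball c \<delta> \<subseteq> D"
    unfolding \<delta>_def by (rule someI_ex)
  then show "\<delta> > 0" "sphere 0 1 \<times> ball c \<delta> \<subseteq> D" by auto
qed

lemma D_circ: "y \<in> ball c \<delta> \<Longrightarrow> (ee t, y) \<in> D"
  using delta(2) by auto

definition "ff y t = \<psi> (ee (-t)) (G (ee t, y) - c)"
definition "T0 y = integral (cbox 0 1) (ff y)"
definition "fx y t = Blinfun (\<lambda>v. \<psi> (ee (-t)) (pdy G (ee t) y v))"

lemma fx_bl: "y \<in> ball c \<delta> \<Longrightarrow> bounded_linear (\<lambda>v. \<psi> (ee (-t)) (pdy G (ee t) y v))"
  using bounded_linear_compose[OF psi_bl[OF ee_nz] has_derivative_bounded_linear[OF pdy_has(1)[OF holoG D_circ]]]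
  by (simp add: o_def)

lemma fx_apply: "y \<in> ball c \<delta> \<Longrightarrow> blinfun_apply (fx y t) v = \<psi> (ee (-t)) (pdy G (ee t) y v)"
  unfolding fx_def using bounded_linear_Blinfun_apply[OF fx_bl] by simp

lemma ff_deriv: "y \<in> ball c \<delta> \<Longrightarrow> ((\<lambda>y. ff y t) has_derivative blinfun_apply (fx y t)) (at y)"
proof -
  assume y: "y \<in> ball c \<delta>"
  have "((\<lambda>y. G (ee t, y) - c) has_derivative pdy G (ee t) y) (at y)"
    using pdy_has(1)[OF holoG D_circ[OF y]] by (auto intro!: derivative_eq_intros)
  from bounded_linear.has_derivative[OF psi_bl[OF ee_nz[of "-t"]] this]
  have "((\<lambda>y. ff y t) has_derivative (\<lambda>v. \<psi> (ee (-t)) (pdy G (ee t) y v))) (at y)"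
    unfolding ff_def .
  moreover have "blinfun_apply (fx y t) = (\<lambda>v. \<psi> (ee (-t)) (pdy G (ee t) y v))"
    using fx_apply[OF y] by auto
  ultimately show ?thesis by simp
qed

lemma ff_cont: "y \<in> ball c \<delta> \<Longrightarrow> continuous_on S (ff y)"
proof -
  assume y: "y \<in> ball c \<delta>"
  have "continuous_on S (\<lambda>t. G (ee t, y))"
    by (rule continuous_on_compose2[OF G_cont]) (auto intro!: continuous_intros D_circ[OF y])
  then show ?thesis unfolding ff_def
    by (intro psi_comp_cont continuous_intros) auto
qed

lemma ff_integrable: "y \<in> ball c \<delta> \<Longrightarrow> ff y integrable_on cbox 0 1"
  by (rule integrable_continuous[OF ff_cont])

lemma fx_cont: "continuous_on (ball c \<delta> \<times> cbox 0 1) (\<lambda>(y, t). fx y t)"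
  unfolding continuous_on_eq_continuous_within
proof
  fix q assume q: "q \<in> ball c \<delta> \<times> cbox (0::real) 1"
  show "continuous (at q within ball c \<delta> \<times> cbox 0 1) (\<lambda>(y, t). fx y t)"
  proof (rule continuous_blinfun_componentwiseI1)
    fix i :: "complex^'n"
    have c1: "continuous_on (ball c \<delta> \<times> cbox (0::real) 1) (\<lambda>x. pdy G (fst (ee (snd x), fst x)) (snd (ee (snd x), fst x)) i)"
      by (rule continuous_on_compose2[OF pdy_cont[OF holoG]]) (auto intro!: continuous_intros D_circ)
    have c2: "continuous_on (ball c \<delta> \<times> cbox (0::real) 1) (\<lambda>x. \<psi> (ee (- snd x)) (pdy G (ee (snd x)) (fst x) i))"
      using c1 by (intro psi_comp_cont continuous_intros) auto
    have "continuous_on (ball c \<delta> \<times> cbox (0::real) 1) (\<lambda>x. ((\<lambda>(y, t). fx y t) x) i)"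
      by (rule continuous_on_eq[OF c2]) (auto simp: fx_apply)
    then show "continuous (at q within ball c \<delta> \<times> cbox 0 1) (\<lambda>x. ((\<lambda>(y, t). fx y t) x) i)"
      using q continuous_on_eq_continuous_within by blast
  qed
qed

definition "DT0 y = integral (cbox 0 1) (fx y)"

lemma T0_deriv: "y \<in> ball c \<delta> \<Longrightarrow> (T0 has_derivative blinfun_apply (DT0 y)) (at y)"
proof -
  assume y: "y \<in> ball c \<delta>"
  have "(T0 has_derivative blinfun_apply (DT0 y)) (at y within ball c \<delta>)"
    unfolding T0_def DT0_def
    by (rule leibniz_rule[OF _ ff_integrable fx_cont y convex_ball])
       (rule has_derivative_at_withinI, rule ff_deriv, simp)
  then show ?thesis using at_within_open[OF y open_ball] by simp
qed

lemma DT0_cont: "continuous_on (ball c \<delta>) DT0"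
  unfolding DT0_def by (rule integral_continuous_on_param[OF fx_cont])

lemma fx_c: "fx c t = id_blinfun"
proof (rule blinfun_eqI)
  fix v
  have "c \<in> ball c \<delta>" using delta by simp
  then show "blinfun_apply (fx c t) v = blinfun_apply id_blinfun v"
    by (simp add: fx_apply pdy_c psi_mult ee_minus psi_1)
qed

lemma DT0_c: "DT0 c = id_blinfun"
  unfolding DT0_def fx_c by simp

lemma T0_c: "T0 c = 0"
proof -
  have "ff c = (\<lambda>t. 0)" by (rule ext) (simp add: ff_def Gc)
  then show ?thesis unfolding T0_def by simp
qed

lemma smult_bl: "bounded_linear (\<lambda>w::complex^'n. a *s w)"
proof -
  have "linear (\<lambda>w::complex^'n. a *s w)"
    by (rule linearI) (auto simp: vec_eq_iff algebra_simps)
  then show ?thesis by (simp add: linear_conv_bounded_linear)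
qed

lemma DT0_cx: "y \<in> ball c \<delta> \<Longrightarrow> DT0 y (a *s v) = a *s DT0 y v"
proof -
  assume y: "y \<in> ball c \<delta>"
  have int: "fx y integrable_on cbox 0 1"
  proof (rule integrable_continuous)
    have "continuous_on (cbox 0 1) (\<lambda>t. (\<lambda>(y, t). fx y t) (y, t))"
      by (rule continuous_on_compose2[OF fx_cont]) (auto intro!: continuous_intros y)
    then show "continuous_on (cbox 0 1) (fx y)" by simp
  qed
  have "DT0 y (a *s v) = integral (cbox 0 1) (\<lambda>t. fx y t (a *s v))"
    unfolding DT0_def by (rule blinfun_apply_integral[OF int])
  also have "\<dots> = integral (cbox 0 1) (\<lambda>t. a *s fx y t v)"
    using y by (simp add: fx_apply pdy_has(2)[OF holoG D_circ] psi_cx)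
  also have "\<dots> = a *s integral (cbox 0 1) (\<lambda>t. fx y t v)"
  proof -
    have i2: "(\<lambda>t. fx y t v) integrable_on cbox 0 1"
      using integrable_linear[OF int blinfun.bounded_linear_left[of v]] by (simp add: o_def)
    show ?thesis using integral_linear[OF i2 smult_bl[of a]] by (simp add: o_def)
  qed
  also have "\<dots> = a *s DT0 y v"
    unfolding DT0_def using blinfun_apply_integral[OF int, of v] by simp
  finally show ?thesis .
qed


lemma G_mult: "(w, y) \<in> D \<Longrightarrow> z \<noteq> 0 \<Longrightarrow> G (z, G (w, y)) = G (z * w, y)"
  by (auto simp: D_def G_def actm)

lemma T0_equiv_circle:
  assumes y: "y \<in> ball c \<delta>" and s: "0 \<le> s" "s \<le> 1"
  shows "T0 (G (ee s, y)) = \<psi> (ee s) (T0 y)"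
proof -
  have Dy: "(ee s, y) \<in> D" by (rule D_circ[OF y])
  have "ff (G (ee s, y)) t = \<psi> (ee s) (ff y (t + s))" for t
  proof -
    have "G (ee t, G (ee s, y)) = G (ee (t + s), y)" by (simp add: G_mult[OF Dy] ee_add)
    moreover have "\<psi> (ee s) (\<psi> (ee (-(t+s))) u) = \<psi> (ee (-t)) u" for u
      by (simp add: psi_mult) (simp add: ee_add[symmetric])
    ultimately show ?thesis by (simp add: ff_def)
  qed
  then have "ff (G (ee s, y)) = (\<lambda>t. \<psi> (ee s) (ff y (t + s)))" by (rule ext)
  then have "T0 (G (ee s, y)) = integral {0..1} (\<lambda>t. \<psi> (ee s) (ff y (t + s)))"
    by (simp add: T0_def)
  also have "\<dots> = \<psi> (ee s) (integral {0..1} (\<lambda>t. ff y (t + s)))"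
  proof -
    have "(\<lambda>t. ff y (t + s)) integrable_on {0..1}"
      by (rule integrable_continuous_interval) (rule continuous_on_compose2[OF ff_cont[OF y]], auto intro!: continuous_intros)
    from integral_linear[OF this psi_bl[OF ee_nz]] show ?thesis by (simp add: o_def)
  qed
  also have "integral {0..1} (\<lambda>t. ff y (t + s)) = integral {0..1} (ff y)"
    by (rule periodic_integral[OF ff_cont[OF y] _ s]) (simp add: ff_def ee_per ee_per')
  finally show ?thesis by (simp add: T0_def)
qed


lemma inv_cx:
  assumes "bij f" "\<And>a v. f (a *s v) = a *s f v"
  shows "inv f (a *s v) = a *s inv f v"
proof -
  have "f (a *s inv f v) = a *s v" using assms by (simp add: bij_is_surj surj_f_inv_f)
  then show ?thesis using assms(1) by (metis bij_is_inj inv_f_f)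
qed

definition "IFTprop = (\<lambda>(U', V, g). open U' \<and> U' \<subseteq> ball c \<delta> \<and> c \<in> U' \<and> open V \<and> 0 \<in> V \<and>
    homeomorphism U' V T0 g \<and>
    (\<forall>y\<in>V. \<exists>g'. (g has_derivative g') (at y) \<and> (\<forall>a v. g' (a *s v) = a *s g' v)))"

lemma IFT_ex: "\<exists>x. IFTprop x"
proof -
  have cin: "c \<in> ball c \<delta>" using delta by simp
  have inv1: "id_blinfun o\<^sub>L DT0 c = id_blinfun" by (simp add: DT0_c) (rule blinfun_eqI, simp)
  obtain U' V g g' where o: "open U'" "U' \<subseteq> ball c \<delta>" "c \<in> U'" "open V" "T0 c \<in> V"
     "homeomorphism U' V T0 g"
     "\<And>y. y \<in> V \<Longrightarrow> (g has_derivative (g' y)) (at y)"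
     "\<And>y. y \<in> V \<Longrightarrow> g' y = inv (blinfun_apply (DT0 (g y)))"
     "\<And>y. y \<in> V \<Longrightarrow> bij (blinfun_apply (DT0 (g y)))"
    using inverse_function_theorem[OF open_ball T0_deriv DT0_cont cin inv1] by blast
  have "\<forall>y\<in>V. \<exists>g'. (g has_derivative g') (at y) \<and> (\<forall>a v. g' (a *s v) = a *s g' v)"
  proof
    fix y assume y: "y \<in> V"
    have gy: "g y \<in> ball c \<delta>" using o(2,6) y by (auto simp: homeomorphism_def)
    have "g' y (a *s v) = a *s g' y v" for a v
      unfolding o(8)[OF y] by (rule inv_cx[OF o(9)[OF y]]) (rule DT0_cx[OF gy])
    with o(7)[OF y] show "\<exists>g'. (g has_derivative g') (at y) \<and> (\<forall>a v. g' (a *s v) = a *s g' v)" by blast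
  qed
  then have "IFTprop (U', V, g)" using o by (simp add: IFTprop_def T0_c)
  then show ?thesis by blast
qed

definition "Up = fst (SOME x. IFTprop x)"
definition "Vp = fst (snd (SOME x. IFTprop x))"
definition "gi = snd (snd (SOME x. IFTprop x))"

lemma IFT: "open Up" "Up \<subseteq> ball c \<delta>" "c \<in> Up" "open Vp" "0 \<in> Vp" "homeomorphism Up Vp T0 gi"
   "\<And>y. y \<in> Vp \<Longrightarrow> \<exists>g'. (gi has_derivative g') (at y) \<and> (\<forall>a v. g' (a *s v) = a *s g' v)"
proof -
  have "IFTprop (SOME x. IFTprop x)" using IFT_ex by (rule someI_ex)
  then have "IFTprop (Up, Vp, gi)" by (simp add: Up_def Vp_def gi_def)
  then show "open Up" "Up \<subseteq> ball c \<delta>" "c \<in> Up" "open Vp" "0 \<in> Vp" "homeomorphism Up Vp T0 gi"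
   "\<And>y. y \<in> Vp \<Longrightarrow> \<exists>g'. (gi has_derivative g') (at y) \<and> (\<forall>a v. g' (a *s v) = a *s g' v)"
    unfolding IFTprop_def by auto
qed


lemma dg_expand: "dg w v = (\<Sum>k\<in>UNIV. (w powi lam k * v $ k) *s axis k 1)"
  using basis_expansion[of "dg w v"] by (simp add: dg_def)

lemma P_sum: "P (\<Sum>k\<in>UNIV. f k *s e k) = (\<Sum>k\<in>UNIV. f k *s P (e k))"
  by (simp add: linear_sum[OF Plinear] Pcx)

lemma vhol_psi: "vhol (\<lambda>w. \<psi> w u) (-{0})"
  unfolding vhol_def
proof
  fix w :: complex assume w: "w \<in> -{0}"
  define v where "v = Pinv u"
  have eq: "(\<Sum>k\<in>UNIV. (x powi lam k * v $ k) *s P (axis k 1)) = \<psi> x u" if "x \<in> -{0}" for x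
  proof -
    from that have "x \<noteq> 0" by auto
    then have "\<psi> x u = P (dg x v)" by (simp add: psi_formula v_def)
    also have "\<dots> = P (\<Sum>k\<in>UNIV. (x powi lam k * v $ k) *s axis k 1)" by (simp only: dg_expand)
    also have "\<dots> = (\<Sum>k\<in>UNIV. (x powi lam k * v $ k) *s P (axis k 1))" by (rule P_sum)
    finally show ?thesis by simp
  qed
  define dd where "dd k = of_int (lam k) * w powi (lam k - 1) * 1 * v $ k" for k
  have d: "((\<lambda>x. x powi lam k * v $ k) has_field_derivative dd k) (at w)" for k
  proof -
    have "((\<lambda>x. x powi lam k) has_field_derivative of_int (lam k) * w powi (lam k - 1) * 1) (at w)"
      by (rule DERIV_power_int[OF DERIV_ident]) (use w in auto)
    from DERIV_cmult_right[OF this, of "v $ k"] show ?thesis by (simp add: dd_def)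
  qed
  have d2: "((\<lambda>x. \<Sum>k\<in>UNIV. (x powi lam k * v $ k) *s P (axis k 1)) has_derivative
        (\<lambda>h. \<Sum>k\<in>UNIV. h *s (dd k *s P (axis k 1)))) (at w)"
    by (rule has_derivative_sum) (rule scal_deriv[OF d])
  have "(\<lambda>h. \<Sum>k\<in>UNIV. h *s (dd k *s P (axis k 1))) = (\<lambda>h. h *s (\<Sum>k\<in>UNIV. dd k *s P (axis k 1)))"
  proof
    fix h
    show "(\<Sum>k\<in>UNIV. h *s (dd k *s P (axis k 1))) = h *s (\<Sum>k\<in>UNIV. dd k *s P (axis k 1))"
      using linear_sum[OF bounded_linear.linear[OF smult_bl[of h]], of "\<lambda>k. dd k *s P (axis k 1)" UNIV]
      by (simp add: o_def)
  qed
  with d2 have "((\<lambda>x. \<Sum>k\<in>UNIV. (x powi lam k * v $ k) *s P (axis k 1)) has_derivative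
        (\<lambda>h. h *s (\<Sum>k\<in>UNIV. dd k *s P (axis k 1)))) (at w)" by simp
  from has_derivative_transform_within_open[OF this _ w eq]
  show "\<exists>a. ((\<lambda>x. \<psi> x u) has_derivative (\<lambda>h. h *s a)) (at w)" by auto
qed

end



lemma vhol_subset: "vhol F S \<Longrightarrow> T \<subseteq> S \<Longrightarrow> vhol F T"
  unfolding vhol_def by blast

lemma ee_ne1: "0 < s \<Longrightarrow> s < 1 \<Longrightarrow> ee s \<noteq> 1"
proof
  assume s: "0 < s" "s < 1" and e: "ee s = 1"
  then obtain n :: int where "2 * pi * s = of_int (2 * n) * pi"
    unfolding ee_def exp_eq_1 by auto
  then have "s = of_int n" by simp
  with s have "(0::real) < of_int n" "of_int n < (1::real)" by auto
  then have "0 < n" "n < 1" by simp_all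
  then show False by simp
qed

lemma one_islimpt: "1 islimpt (ee ` {0<..<1} \<inter> ball 1 (1/2))"
  unfolding islimpt_approachable
proof (intro allI impI)
  fix e :: real assume e: "e > 0"
  have "isCont ee 0" unfolding ee_def by (intro continuous_intros)
  moreover have "min e (1/2) > 0" using e by simp
  ultimately obtain d where d: "d > 0" "\<And>s. dist s 0 < d \<Longrightarrow> dist (ee s) (ee 0) < min e (1/2)"
    unfolding continuous_at_eps_delta by blast
  define s where "s = min (d/2) (1/2)"
  have s: "0 < s" "s < 1" "dist s 0 < d" using d by (auto simp: s_def)
  have "dist (ee s) 1 < min e (1/2)" using d(2)[OF s(3)] by simp
  then show "\<exists>x'\<in>ee ` {0<..<1} \<inter> ball 1 (1/2). x' \<noteq> 1 \<and> dist x' 1 < e"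
    using s ee_ne1[OF s(1,2)] by (auto simp: dist_commute intro!: bexI[of _ "ee s"])
qed

context lin_setup
begin

definition "eps = (SOME e. e > 0 \<and> ball c e \<subseteq> Up)"

lemma eps: "eps > 0" "ball c eps \<subseteq> Up"
proof -
  have "\<exists>e. e > 0 \<and> ball c e \<subseteq> Up" using IFT(1,3) open_contains_ball by blast
  then have "eps > 0 \<and> ball c eps \<subseteq> Up" unfolding eps_def by (rule someI_ex)
  then show "eps > 0" "ball c eps \<subseteq> Up" by auto
qed

lemma eps_delta: "ball c eps \<subseteq> ball c \<delta>" using eps(2) IFT(2) by blast

definition "E = D \<inter> G -` ball c eps"

lemma openE: "open E" unfolding E_def
  by (rule continuous_open_preimage[OF G_cont openD open_ball])

definition "eps2 = (SOME e. e > 0 \<and> e \<le> eps \<and> cball 1 (1/2) \<times> ball c e \<subseteq> E)"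

lemma eps2: "eps2 > 0" "eps2 \<le> eps" "cball 1 (1/2) \<times> ball c eps2 \<subseteq> E"
proof -
  have "cball 1 (1/2) \<times> {c} \<subseteq> E"
  proof safe
    fix z :: complex assume "z \<in> cball 1 (1/2)"
    then have "z \<noteq> 0" by (auto simp: dist_norm)
    then show "(z, c) \<in> E" using Dc Gc eps by (auto simp: E_def)
  qed
  then obtain d where d: "d > 0" "cball 1 (1/2) \<times> ball c d \<subseteq> E"
    using tube_swap[OF compact_cball openE] by blast
  have "min d eps > 0 \<and> min d eps \<le> eps \<and> cball 1 (1/2) \<times> ball c (min d eps) \<subseteq> E"
    using d eps by auto
  then have "\<exists>e. e > 0 \<and> e \<le> eps \<and> cball 1 (1/2) \<times> ball c e \<subseteq> E" by blast
  then have "eps2 > 0 \<and> eps2 \<le> eps \<and> cball 1 (1/2) \<times> ball c eps2 \<subseteq> E"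
    unfolding eps2_def by (rule someI_ex)
  then show "eps2 > 0" "eps2 \<le> eps" "cball 1 (1/2) \<times> ball c eps2 \<subseteq> E" by auto
qed

lemma tube1:
  assumes "w \<in> cball 1 (1/2)" "y \<in> ball c eps2"
  shows "(w, y) \<in> D" "G (w, y) \<in> ball c eps"
proof -
  have "(w, y) \<in> E" using eps2(3) assms by blast
  then show "(w, y) \<in> D" "G (w, y) \<in> ball c eps" by (auto simp: E_def)
qed

lemma eps2_delta: "ball c eps2 \<subseteq> ball c \<delta>" using eps2(2) eps_delta by auto

lemma vhol_T0G:
  assumes y: "y \<in> ball c eps2"
  shows "vhol (\<lambda>w. T0 (G (w, y))) (ball 1 (1/2))"
  unfolding vhol_def
proof
  fix w :: complex assume w: "w \<in> ball 1 (1/2)"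
  then have w': "w \<in> cball 1 (1/2)" by auto
  obtain a where a: "((\<lambda>w. G (w, y)) has_derivative (\<lambda>h. h *s a)) (at w)"
    using holo2_partial_z[OF holoG tube1(1)[OF w' y]] by blast
  have gb: "G (w, y) \<in> ball c \<delta>" using tube1(2)[OF w' y] eps_delta by auto
  from diff_chain_at[OF a T0_deriv[OF gb]]
  have "((\<lambda>w. T0 (G (w, y))) has_derivative (\<lambda>h. DT0 (G (w, y)) (h *s a))) (at w)"
    by (simp add: o_def)
  moreover have "(\<lambda>h. DT0 (G (w, y)) (h *s a)) = (\<lambda>h. h *s DT0 (G (w, y)) a)"
    by (rule ext) (rule DT0_cx[OF gb])
  ultimately show "\<exists>b. ((\<lambda>w. T0 (G (w, y))) has_derivative (\<lambda>h. h *s b)) (at w)" by auto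
qed

lemma T0_equiv_ball:
  assumes y: "y \<in> ball c eps2" and w: "w \<in> ball 1 (1/2)"
  shows "T0 (G (w, y)) = \<psi> w (T0 y)"
proof -
  have sub0: "ball 1 (1/2) \<subseteq> -{0::complex}" by (auto simp: dist_norm)
  have "T0 (G (w, y)) $ j - \<psi> w (T0 y) $ j = 0" for j
  proof (rule analytic_continuation[of "\<lambda>z. T0 (G (z, y)) $ j - \<psi> z (T0 y) $ j" "ball 1 (1/2)" "ee ` {0<..<1} \<inter> ball 1 (1/2)" 1 w])
    show "(\<lambda>z. T0 (G (z, y)) $ j - \<psi> z (T0 y) $ j) holomorphic_on ball 1 (1/2)"
      by (intro holomorphic_intros vhol_comp vhol_T0G[OF y] vhol_subset[OF vhol_psi sub0])
    show "1 islimpt ee ` {0<..<1} \<inter> ball 1 (1/2)" by (rule one_islimpt)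
    fix z assume "z \<in> ee ` {0<..<1} \<inter> ball 1 (1/2)"
    then obtain s where s: "z = ee s" "0 < s" "s < 1" by auto
    have "T0 (G (ee s, y)) = \<psi> (ee s) (T0 y)"
      by (rule T0_equiv_circle) (use y eps2_delta s in auto)
    then show "T0 (G (z, y)) $ j - \<psi> z (T0 y) $ j = 0" using s by simp
  qed (use w in auto)
  then show ?thesis by (simp add: vec_eq_iff)
qed


definition "K = {w::complex. w \<noteq> 0 \<and> (if pos then norm w \<le> 1 else 1 \<le> norm w)}"

lemma K_nz: "w \<in> K \<Longrightarrow> w \<noteq> 0" by (simp add: K_def)

lemma K_1: "1 \<in> K" by (simp add: K_def)

lemma K_powi: assumes "w \<in> K" shows "norm (w powi lam j) \<le> 1"
proof (cases pos)
  case True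
  then have l: "lam j > 0" by (rule lam_pos)
  have "norm w \<le> 1" using assms True unfolding K_def by auto
  then have "norm w ^ nat (lam j) \<le> 1" by (simp add: power_le_one)
  then show ?thesis using l by (simp add: norm_power_int power_int_def norm_power)
next
  case False
  then have l: "lam j < 0" by (rule lam_neg)
  have "norm w \<ge> 1" using assms False unfolding K_def by auto
  then have "norm w ^ nat (- lam j) \<ge> 1" by (simp add: one_le_power)
  then show ?thesis using l by (simp add: norm_power_int power_int_def inverse_le_1_iff norm_power norm_inverse power_inverse)
qed

lemma K_or: "z \<noteq> 0 \<Longrightarrow> z \<in> K \<or> inverse z \<in> K"
  by (auto simp: K_def norm_inverse inverse_le_1_iff one_le_inverse_iff)

lemma K_root:
  assumes w: "w \<in> K"
  shows "\<exists>w1 k. w1 \<in> ball 1 (1/2) \<and> w1 \<in> K \<and> w = w1 ^ k"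
proof -
  have w0: "w \<noteq> 0" using w by (simp add: K_def)
  have "(\<lambda>k. exp (Ln w / of_nat k)) \<longlonglongrightarrow> exp 0"
    by (intro tendsto_intros)
  then have "(\<lambda>k. exp (Ln w / of_nat k)) \<longlonglongrightarrow> 1" by simp
  from tendstoD[OF this, of "1/2"]
  have "\<forall>\<^sub>F k in sequentially. dist (exp (Ln w / of_nat k)) 1 < 1/2" by simp
  moreover have "\<forall>\<^sub>F k in sequentially. k \<ge> (1::nat)" by (rule eventually_ge_at_top)
  ultimately have "\<forall>\<^sub>F k in sequentially. dist (exp (Ln w / of_nat k)) 1 < 1/2 \<and> k \<ge> (1::nat)"
    by (rule eventually_conj)
  then obtain N where "\<forall>n\<ge>N. dist (exp (Ln w / of_nat n)) 1 < 1/2 \<and> n \<ge> (1::nat)"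
    unfolding eventually_sequentially by blast
  then obtain k :: nat where k: "dist (exp (Ln w / of_nat k)) 1 < 1/2" "k \<ge> 1" by blast
  define w1 where "w1 = exp (Ln w / of_nat k)"
  have pw: "w1 ^ k = w"
  proof -
    have "w1 ^ k = exp (of_nat k * (Ln w / of_nat k))" unfolding w1_def by (rule exp_of_nat_mult[symmetric])
    also have "of_nat k * (Ln w / of_nat k) = Ln w" using k(2) by simp
    finally show ?thesis using w0 by simp
  qed
  have nw1: "norm w1 = exp (ln (norm w) / real k)"
    unfolding w1_def using w0 by simp
  have "w1 \<in> K"
  proof (cases pos)
    case True
    then have "norm w \<le> 1" using w unfolding K_def by auto
    then have "ln (norm w) \<le> 0" using w0 by simp
    then have "ln (norm w) / real k \<le> 0" by (simp add: divide_nonpos_nonneg)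
    then have "norm w1 \<le> 1" using nw1 by simp
    then show ?thesis using True unfolding K_def w1_def by auto
  next
    case False
    then have "norm w \<ge> 1" using w unfolding K_def by auto
    then have "ln (norm w) \<ge> 0" using w0 by simp
    then have "ln (norm w) / real k \<ge> 0" by simp
    then have "norm w1 \<ge> 1" using nw1 by simp
    then show ?thesis using False unfolding K_def w1_def by auto
  qed
  moreover have "w1 \<in> ball 1 (1/2)" using k(1) by (simp add: w1_def dist_commute)
  ultimately show ?thesis using pw by blast
qed

lemma P_bound: "\<exists>KP>0. \<forall>x. norm (P x) \<le> norm x * KP"
  using bounded_linear.pos_bounded[OF P_bl] by blast

lemma norm_le_sum_comp: "norm (x::complex^'n) \<le> (\<Sum>j\<in>UNIV. norm (x $ j))"
  unfolding norm_vec_def by (rule L2_set_le_sum) simp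

definition "O0 = T0 ` ball c eps2"

lemma O0: "open O0" "0 \<in> O0"
proof -
  have sub: "ball c eps2 \<subseteq> Up" using eps eps2 by auto
  have "openin (top_of_set Up) (ball c eps2)"
    using sub by (simp add: openin_open_eq IFT(1))
  from homeomorphism_imp_open_map[OF IFT(6) this]
  show "open O0" unfolding O0_def using IFT(4) openin_open_trans by blast
  show "0 \<in> O0" unfolding O0_def using eps2(1) T0_c by (metis centre_in_ball imageI)
qed

definition "beta = (SOME b. b > 0 \<and> {u. \<forall>j. norm (Pinv u $ j) < b} \<subseteq> O0)"

lemma beta_ex: "\<exists>b. b > 0 \<and> {u. \<forall>j. norm (Pinv u $ j) < b} \<subseteq> O0"
proof -
  obtain g where g: "g > 0" "ball 0 g \<subseteq> O0" using O0 open_contains_ball by blast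
  obtain KP where KP: "KP > 0" "\<And>x. norm (P x) \<le> norm x * KP" using P_bound by blast
  define b where "b = g / (real CARD('n) * KP)"
  have b: "b > 0" using g KP by (simp add: b_def)
  have "{u. \<forall>j. norm (Pinv u $ j) < b} \<subseteq> ball 0 g"
  proof
    fix u assume u: "u \<in> {u. \<forall>j. norm (Pinv u $ j) < b}"
    have "norm (Pinv u) \<le> (\<Sum>j\<in>UNIV. norm (Pinv u $ j))" by (rule norm_le_sum_comp)
    also have "\<dots> < (\<Sum>j\<in>(UNIV::'n set). b)"
      by (rule sum_strict_mono) (use u in auto)
    also have "\<dots> = real CARD('n) * b" by simp
    finally have "norm (Pinv u) < real CARD('n) * b" .
    moreover have "norm u \<le> norm (Pinv u) * KP" using KP(2)[of "Pinv u"] by simp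
    ultimately have "norm u < real CARD('n) * b * KP"
      using mult_strict_right_mono[OF \<open>norm (Pinv u) < real CARD('n) * b\<close> KP(1)] by linarith
    also have "\<dots> = g" using KP(1) by (simp add: b_def)
    finally show "u \<in> ball 0 g" by simp
  qed
  with g b show ?thesis by blast
qed

lemma beta: "beta > 0" "{u. \<forall>j. norm (Pinv u $ j) < beta} \<subseteq> O0"
  using someI_ex[OF beta_ex] unfolding beta_def[symmetric] by auto

definition "B0 = {u. \<forall>j. norm (Pinv u $ j) < beta}"

lemma B0_O0: "B0 \<subseteq> O0" using beta(2) by (simp add: B0_def)

lemma B0_open: "open B0"
proof -
  have "B0 = (\<Inter>j\<in>UNIV. (\<lambda>u. norm (Pinv u $ j)) -` {..<beta})" by (auto simp: B0_def)
  moreover have "open ((\<lambda>u. norm (Pinv u $ j)) -` {..<beta})" for j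
  proof (rule continuous_open_vimage)
    have "bounded_linear (\<lambda>u. Pinv u $ j)"
      using bounded_linear_compose[OF bounded_linear_vec_nth Pinv_bl] by (simp add: o_def)
    from linear_continuous_at[OF this] show "isCont (\<lambda>u. norm (Pinv u $ j)) x" for x
      by (rule continuous_norm)
  qed simp
  ultimately show ?thesis by auto
qed

lemma Pinv_0[simp]: "Pinv 0 = 0" using linear_0[OF Pinv_linear] .

lemma B0_0: "0 \<in> B0" using beta by (simp add: B0_def)

lemma Pinv_psi: "w \<noteq> 0 \<Longrightarrow> Pinv (\<psi> w u) = dg w (Pinv u)"
  by (simp add: psi_formula)

lemma B0_inv: "w \<in> K \<Longrightarrow> u \<in> B0 \<Longrightarrow> \<psi> w u \<in> B0"
proof -
  assume w: "w \<in> K" and u: "u \<in> B0"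
  have "norm (Pinv (\<psi> w u) $ j) < beta" for j
  proof -
    have "norm (Pinv (\<psi> w u) $ j) = norm (w powi lam j) * norm (Pinv u $ j)"
      using K_nz[OF w] by (simp add: Pinv_psi dg_def norm_mult)
    also have "\<dots> \<le> norm (Pinv u $ j)" using K_powi[OF w] by (simp add: mult_left_le_one_le)
    also have "\<dots> < beta" using u by (simp add: B0_def)
    finally show ?thesis .
  qed
  then show ?thesis by (simp add: B0_def)
qed

lemma B0_reach: "\<exists>w. w \<noteq> 0 \<and> \<psi> w u \<in> B0"
proof -
  define v where "v = Pinv u"
  define M where "M = (\<Sum>j\<in>UNIV. norm (v $ j)) + 1"
  have M: "M \<ge> 1" "\<And>j. norm (v $ j) \<le> M"
  proof -
    show "M \<ge> 1" by (simp add: M_def sum_nonneg)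
    fix j
    have "norm (v $ j) \<le> (\<Sum>j\<in>UNIV. norm (v $ j))" by (rule member_le_sum) auto
    then show "norm (v $ j) \<le> M" by (simp add: M_def)
  qed
  define s where "s = min (1/2) (beta / (2 * M))"
  have s: "s > 0" "s \<le> 1/2" "s * M < beta" using beta(1) M(1)
    by (auto simp: s_def min_def field_simps)
  define w :: complex where "w = (if pos then of_real s else of_real (1/s))"
  have w0: "w \<noteq> 0" using s by (simp add: w_def)
  have nw: "norm (w powi lam j) \<le> s" for j
  proof (cases pos)
    case True
    then have l: "lam j > 0" by (rule lam_pos)
    have "s ^ nat (lam j) \<le> s ^ 1" by (rule power_decreasing) (use l s in auto)
    then show ?thesis using l s True by (simp add: w_def norm_power_int power_int_def norm_power)
  next
    case False
    then have l: "lam j < 0" by (rule lam_neg)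
    have "s ^ nat (- lam j) \<le> s ^ 1" by (rule power_decreasing) (use l s in auto)
    then show ?thesis using l s False by (simp add: w_def norm_power_int power_int_def power_inverse norm_power)
  qed
  have "norm (Pinv (\<psi> w u) $ j) < beta" for j
  proof -
    have "norm (Pinv (\<psi> w u) $ j) = norm (w powi lam j) * norm (v $ j)"
      using w0 by (simp add: Pinv_psi dg_def norm_mult v_def)
    also have "\<dots> \<le> s * M" by (rule mult_mono[OF nw M(2)]) (use s in auto)
    also have "\<dots> < beta" by (rule s(3))
    finally show ?thesis .
  qed
  then show ?thesis using w0 by (auto simp: B0_def)
qed


definition "Y1 = ball c eps2 \<inter> T0 -` B0"

lemma Y1_open: "open Y1"
proof -
  have "continuous_on (ball c eps2) T0"
    by (rule continuous_on_subset[OF _ eps2_delta])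
       (meson T0_deriv continuous_at_imp_continuous_on has_derivative_continuous)
  then show ?thesis unfolding Y1_def
    by (rule continuous_open_preimage[OF _ open_ball B0_open])
qed

lemma c_Y1: "c \<in> Y1" using eps2(1) B0_0 T0_c by (simp add: Y1_def)

lemma Y1_U: "y \<in> Y1 \<Longrightarrow> y \<in> \<xi> ` U"
proof -
  assume "y \<in> Y1"
  then have "y \<in> ball c \<delta>" using eps2_delta by (auto simp: Y1_def)
  from D_circ[OF this, of 0] show ?thesis by (simp add: D_def)
qed

lemma T0_inj: "x \<in> Up \<Longrightarrow> y \<in> Up \<Longrightarrow> T0 x = T0 y \<Longrightarrow> x = y"
  by (metis IFT(6) homeomorphism_apply1)

lemma ball_eps2_Up: "ball c eps2 \<subseteq> Up" using eps eps2 by auto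

lemma step1:
  assumes y: "y \<in> Y1" and w: "w \<in> ball 1 (1/2)" "w \<in> K"
  shows "(w, y) \<in> D" "G (w, y) \<in> Y1" "T0 (G (w, y)) = \<psi> w (T0 y)"
proof -
  have yb: "y \<in> ball c eps2" "T0 y \<in> B0" using y by (auto simp: Y1_def)
  have w': "w \<in> cball 1 (1/2)" using w by auto
  show "(w, y) \<in> D" by (rule tube1(1)[OF w' yb(1)])
  have gU: "G (w, y) \<in> Up" using tube1(2)[OF w' yb(1)] eps(2) by auto
  show eq: "T0 (G (w, y)) = \<psi> w (T0 y)" by (rule T0_equiv_ball[OF yb(1) w(1)])
  have inB: "T0 (G (w, y)) \<in> B0" using eq B0_inv[OF w(2) yb(2)] by simp
  then obtain y2 where y2: "y2 \<in> ball c eps2" "T0 y2 = T0 (G (w, y))"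
    using B0_O0 unfolding O0_def by auto
  have "y2 = G (w, y)" using T0_inj[OF _ gU y2(2)] y2(1) ball_eps2_Up by auto
  then show "G (w, y) \<in> Y1" using y2(1) inB by (simp add: Y1_def)
qed

lemma G_1: "y \<in> \<xi> ` U \<Longrightarrow> G (1, y) = y" by (simp add: G_def act1)
lemma D_1: "y \<in> \<xi> ` U \<Longrightarrow> (1, y) \<in> D" by (simp add: D_def act1 inv_in)

lemma stepk:
  assumes y: "y \<in> Y1" and w: "w \<in> ball 1 (1/2)" "w \<in> K"
  shows "(w ^ k, y) \<in> D \<and> G (w ^ k, y) \<in> Y1 \<and> T0 (G (w ^ k, y)) = \<psi> (w ^ k) (T0 y)"
proof (induction k)
  case 0
  show ?case using Y1_U[OF y] y by (simp add: G_1 D_1 psi_1)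
next
  case (Suc k)
  have w0: "w \<noteq> 0" using w(2) K_nz by blast
  let ?y = "G (w ^ k, y)"
  have s: "(w, ?y) \<in> D" "G (w, ?y) \<in> Y1" "T0 (G (w, ?y)) = \<psi> w (T0 ?y)"
    using step1[of ?y w] Suc.IH w by auto
  have m: "(w * w ^ k, y) \<in> D" "G (w, ?y) = G (w * w ^ k, y)"
    using D_mult[of "w ^ k" y w] Suc.IH s(1) by auto
  have "\<psi> w (\<psi> (w ^ k) (T0 y)) = \<psi> (w * w ^ k) (T0 y)"
    using w0 by (simp add: psi_mult)
  then show ?case using m s Suc.IH by simp
qed

lemma Y1_invariant:
  assumes y: "y \<in> Y1" and w: "w \<in> K"
  shows "(w, y) \<in> D" "G (w, y) \<in> Y1" "T0 (G (w, y)) = \<psi> w (T0 y)"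
proof -
  obtain w1 k where "w1 \<in> ball 1 (1/2)" "w1 \<in> K" "w = w1 ^ k" using K_root[OF w] by blast
  then show "(w, y) \<in> D" "G (w, y) \<in> Y1" "T0 (G (w, y)) = \<psi> w (T0 y)"
    using stepk[OF y, of w1 k] by auto
qed

end



lemma holo2_slice_open:
  assumes "holo2 D g" "open Y"
  shows "open {y. (z, y) \<in> D \<and> g (z, y) \<in> Y}"
proof -
  have "open (D \<inter> g -` Y)"
    using continuous_open_preimage[OF holo2_continuous[OF assms(1)] _ assms(2)] assms(1)
    unfolding holo2_def by blast
  then have "open ((\<lambda>y. (z, y)) -` (D \<inter> g -` Y))"
    by (rule continuous_open_vimage) (intro continuous_intros)
  moreover have "(\<lambda>y. (z, y)) -` (D \<inter> g -` Y) = {y. (z, y) \<in> D \<and> g (z, y) \<in> Y}" by auto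
  ultimately show ?thesis by simp
qed

context lin_setup
begin

lemma chart_map_deriv:
  assumes "(U1, \<xi>1) \<in> atlas" "(U2, \<xi>2) \<in> atlas" "z \<noteq> 0" "y \<in> \<xi>1 ` U1" "\<phi> z (inv_into U1 \<xi>1 y) \<in> U2"
  shows "\<exists>L. ((\<lambda>y. \<xi>2 (\<phi> z (inv_into U1 \<xi>1 y))) has_derivative L) (at y) \<and> (\<forall>a v. L (a *s v) = a *s L v)"
  using holo2_partial_y[OF holo2_charts[OF assms(1,2)], of z y] assms(3-5) by simp

lemma chart_map_open:
  assumes "(U1, \<xi>1) \<in> atlas" "(U2, \<xi>2) \<in> atlas" "z \<noteq> 0" "open Y"
  shows "open {y. y \<in> \<xi>1 ` U1 \<and> \<phi> z (inv_into U1 \<xi>1 y) \<in> U2 \<and> \<xi>2 (\<phi> z (inv_into U1 \<xi>1 y)) \<in> Y}"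
  using holo2_slice_open[OF holo2_charts[OF assms(1,2)] assms(4), of z] assms(3) by simp

lemma phi_cont: "z \<noteq> 0 \<Longrightarrow> continuous_on UNIV (\<phi> z)"
proof -
  assume z: "z \<noteq> 0"
  have "continuous_on UNIV (\<lambda>x. (\<lambda>(z,x). \<phi> z x) (z, x))"
    by (rule continuous_on_compose2[OF act_cont]) (use z in \<open>auto intro!: continuous_intros\<close>)
  then show ?thesis by simp
qed

definition "W = {x \<in> U. \<xi> x \<in> Y1}"

lemma W_open: "open W"
proof -
  have "open (U \<inter> \<xi> -` Y1)"
    by (rule continuous_open_preimage[OF _ chart_props(1) Y1_open])
       (use chart_props(3) in \<open>simp add: homeomorphism_def\<close>)
  moreover have "W = U \<inter> \<xi> -` Y1" by (auto simp: W_def)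
  ultimately show ?thesis by simp
qed

lemma p_W: "p \<in> W" using chart(2) c_Y1 by (simp add: W_def c_def)

lemma W_inv:
  assumes x: "x \<in> W" and w: "w \<in> K"
  shows "\<phi> w x \<in> W" "T0 (\<xi> (\<phi> w x)) = \<psi> w (T0 (\<xi> x))"
proof -
  have xU: "x \<in> U" "\<xi> x \<in> Y1" using x by (auto simp: W_def)
  have i: "inv_into U \<xi> (\<xi> x) = x" using xU by simp
  from Y1_invariant[OF xU(2) w] i
  show "\<phi> w x \<in> W" "T0 (\<xi> (\<phi> w x)) = \<psi> w (T0 (\<xi> x))"
    by (auto simp: D_def G_def W_def)
qed

definition "A = {x. \<exists>w. w \<noteq> 0 \<and> \<phi> w x \<in> W}"
definition "Tm x = (SOME w. w \<noteq> 0 \<and> \<phi> w x \<in> W)"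
definition "T x = \<psi> (inverse (Tm x)) (T0 (\<xi> (\<phi> (Tm x) x)))"

lemma Tm: "x \<in> A \<Longrightarrow> Tm x \<noteq> 0 \<and> \<phi> (Tm x) x \<in> W"
  unfolding A_def Tm_def by (rule someI_ex) auto

lemma T_aux:
  assumes w: "w \<noteq> 0" "\<phi> w x \<in> W" and v: "w' / w \<in> K" and w': "w' \<noteq> 0"
  shows "\<phi> w' x \<in> W" "\<psi> (inverse w) (T0 (\<xi> (\<phi> w x))) = \<psi> (inverse w') (T0 (\<xi> (\<phi> w' x)))"
proof -
  have e: "\<phi> w' x = \<phi> (w' / w) (\<phi> w x)" using w w' actm[of "w'/w" w x] by simp
  show "\<phi> w' x \<in> W" using e W_inv(1)[OF w(2) v] by simp
  have "T0 (\<xi> (\<phi> w' x)) = \<psi> (w' / w) (T0 (\<xi> (\<phi> w x)))" using e W_inv(2)[OF w(2) v] by simp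
  then have "\<psi> (inverse w') (T0 (\<xi> (\<phi> w' x))) = \<psi> (inverse w' * (w' / w)) (T0 (\<xi> (\<phi> w x)))"
    using w w' by (simp add: psi_mult)
  also have "inverse w' * (w' / w) = inverse w" using w' by (simp add: field_simps)
  finally show "\<psi> (inverse w) (T0 (\<xi> (\<phi> w x))) = \<psi> (inverse w') (T0 (\<xi> (\<phi> w' x)))" by simp
qed

lemma T_eq:
  assumes w: "w \<noteq> 0" "\<phi> w x \<in> W"
  shows "T x = \<psi> (inverse w) (T0 (\<xi> (\<phi> w x)))"
proof -
  have xA: "x \<in> A" using w by (auto simp: A_def)
  note t = Tm[OF xA]
  consider "w / Tm x \<in> K" | "Tm x / w \<in> K"
    using K_or[of "w / Tm x"] w t by (auto simp: inverse_eq_divide)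
  then show ?thesis
  proof cases
    case 1
    then show ?thesis using T_aux(2)[OF t[THEN conjunct1] t[THEN conjunct2] 1 w(1)] by (simp add: T_def)
  next
    case 2
    then show ?thesis using T_aux(2)[OF w 2 t[THEN conjunct1]] by (simp add: T_def)
  qed
qed

lemma A_open: "open A"
proof -
  have "A = (\<Union>w\<in>-{0}. \<phi> w -` W)" by (auto simp: A_def)
  moreover have "open (\<phi> w -` W)" if "w \<in> -{0}" for w
    using phi_cont[of w] that W_open by (auto intro: open_vimage)
  ultimately show ?thesis by (metis open_UN)
qed

lemma p_A: "p \<in> A" using p_W act1[of p] by (auto simp: A_def intro!: exI[of _ 1])

lemma A_inv: "z \<noteq> 0 \<Longrightarrow> x \<in> A \<Longrightarrow> \<phi> z x \<in> A"
proof -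
  assume z: "z \<noteq> 0" and x: "x \<in> A"
  note t = Tm[OF x]
  have "\<phi> (Tm x / z) (\<phi> z x) = \<phi> (Tm x) x" using z t actm[of "Tm x / z" z x] by simp
  then show "\<phi> z x \<in> A" using t z unfolding A_def by (intro CollectI exI[of _ "Tm x / z"]) auto
qed

lemma T_equiv: "z \<noteq> 0 \<Longrightarrow> x \<in> A \<Longrightarrow> \<psi> z (T x) = T (\<phi> z x)"
proof -
  assume z: "z \<noteq> 0" and x: "x \<in> A"
  note t = Tm[OF x]
  have e: "\<phi> (Tm x / z) (\<phi> z x) = \<phi> (Tm x) x" using z t actm[of "Tm x / z" z x] by simp
  have "T (\<phi> z x) = \<psi> (inverse (Tm x / z)) (T0 (\<xi> (\<phi> (Tm x) x)))"
    using T_eq[of "Tm x / z" "\<phi> z x"] e t z by simp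
  also have "inverse (Tm x / z) = z * inverse (Tm x)" using z t by (simp add: field_simps)
  also have "\<psi> (z * inverse (Tm x)) (T0 (\<xi> (\<phi> (Tm x) x))) = \<psi> z (T x)"
    using z t by (simp add: psi_mult T_def)
  finally show ?thesis by simp
qed


lemma psi_inv: "w \<noteq> 0 \<Longrightarrow> \<psi> (inverse w) (\<psi> w u) = u"
  by (simp add: psi_mult psi_1)

lemma psi_inv': "w \<noteq> 0 \<Longrightarrow> \<psi> w (\<psi> (inverse w) u) = u"
  by (simp add: psi_mult psi_1)

lemma W_sub: "x \<in> W \<Longrightarrow> x \<in> U \<and> \<xi> x \<in> Y1 \<and> \<xi> x \<in> Up"
  using ball_eps2_Up by (auto simp: W_def Y1_def)

lemma T_inj: "inj_on T A"
proof
  fix x x' assume x: "x \<in> A" and x': "x' \<in> A" and eq: "T x = T x'"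
  note t = Tm[OF x] and t' = Tm[OF x']
  obtain w where w: "w \<noteq> 0" "\<phi> w x \<in> W" "\<phi> w x' \<in> W"
  proof (cases "Tm x' / Tm x \<in> K")
    case True
    then show ?thesis using that[of "Tm x'"] T_aux(1)[OF t[THEN conjunct1] t[THEN conjunct2] True] t t' by auto
  next
    case False
    then have k: "Tm x / Tm x' \<in> K" using K_or[of "Tm x' / Tm x"] t t' by (auto simp: inverse_eq_divide)
    show ?thesis using that[of "Tm x"] T_aux(1)[OF t'[THEN conjunct1] t'[THEN conjunct2] k] t t' by auto
  qed
  have "\<psi> (inverse w) (T0 (\<xi> (\<phi> w x))) = \<psi> (inverse w) (T0 (\<xi> (\<phi> w x')))"
    using eq T_eq[OF w(1,2)] T_eq[OF w(1,3)] by simp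
  then have "\<psi> w (\<psi> (inverse w) (T0 (\<xi> (\<phi> w x)))) = \<psi> w (\<psi> (inverse w) (T0 (\<xi> (\<phi> w x'))))" by simp
  then have "T0 (\<xi> (\<phi> w x)) = T0 (\<xi> (\<phi> w x'))" using w(1) by (simp add: psi_inv')
  then have "\<xi> (\<phi> w x) = \<xi> (\<phi> w x')" using T0_inj W_sub[OF w(2)] W_sub[OF w(3)] by blast
  then have "\<phi> w x = \<phi> w x'" using W_sub[OF w(2)] W_sub[OF w(3)] inv_xi by metis
  then have "\<phi> (inverse w) (\<phi> w x) = \<phi> (inverse w) (\<phi> w x')" by simp
  then show "x = x'" using w(1) actm[of "inverse w" w] act1 by simp
qed

lemma B0_Vp: "B0 \<subseteq> Vp"
proof -
  have "O0 \<subseteq> Vp" unfolding O0_def using ball_eps2_Up IFT(6)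
    by (auto simp: homeomorphism_def)
  then show ?thesis using B0_O0 by auto
qed

lemma gi_B0:
  assumes "v \<in> B0"
  shows "gi v \<in> Y1" "T0 (gi v) = v"
proof -
  obtain y where y: "y \<in> ball c eps2" "T0 y = v" using assms B0_O0 unfolding O0_def by auto
  have "gi v = y" using y ball_eps2_Up IFT(6) by (metis homeomorphism_apply1 subsetD)
  then show "gi v \<in> Y1" "T0 (gi v) = v" using y assms by (auto simp: Y1_def)
qed

definition "Sx w u = \<phi> (inverse w) (inv_into U \<xi> (gi (\<psi> w u)))"

lemma Sx_props:
  assumes w: "w \<noteq> 0" "\<psi> w u \<in> B0"
  shows "Sx w u \<in> A" "T (Sx w u) = u" "inv_into A T u = Sx w u"
proof -
  have yY: "gi (\<psi> w u) \<in> Y1" and Ty: "T0 (gi (\<psi> w u)) = \<psi> w u" using gi_B0[OF w(2)] by auto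
  define x0 where "x0 = inv_into U \<xi> (gi (\<psi> w u))"
  have x0: "x0 \<in> U" "\<xi> x0 = gi (\<psi> w u)" using Y1_U[OF yY] by (auto simp: x0_def inv_in)
  then have x0W: "x0 \<in> W" using yY by (simp add: W_def)
  have e: "\<phi> w (Sx w u) = x0" using w(1) actm[of w "inverse w" x0] act1 by (simp add: Sx_def x0_def)
  show SA: "Sx w u \<in> A" using e x0W w(1) by (auto simp: A_def)
  have "T (Sx w u) = \<psi> (inverse w) (T0 (\<xi> x0))" using T_eq[of w "Sx w u"] e x0W w(1) by simp
  also have "\<dots> = u" using x0 Ty w(1) by (simp add: psi_inv)
  finally show TS: "T (Sx w u) = u" .
  show "inv_into A T u = Sx w u" by (rule inv_into_f_eq[OF T_inj SA TS])
qed

lemma T_surj: "T ` A = UNIV"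
proof -
  have "u \<in> T ` A" for u
  proof -
    obtain w where "w \<noteq> 0" "\<psi> w u \<in> B0" using B0_reach by blast
    from Sx_props[OF this] show ?thesis by (metis imageI)
  qed
  then show ?thesis by auto
qed

lemma T_bij: "bij_betw T A UNIV"
  using T_inj T_surj by (simp add: bij_betw_def)


lemma Y1_delta: "Y1 \<subseteq> ball c \<delta>" using eps2_delta by (auto simp: Y1_def)

lemma atlas_chart: "(U1, \<xi>1) \<in> atlas \<Longrightarrow> open U1 \<and> open (\<xi>1 ` U1) \<and> homeomorphism U1 (\<xi>1 ` U1) \<xi>1 (inv_into U1 \<xi>1)"
  using atlas unfolding complex_atlas_def by auto

lemma T_holo_from: "holo_from_mfd atlas A T"
  unfolding holo_from_mfd_def
proof (intro conjI A_open ballI, clarify)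
  fix U1 \<xi>1 assume ch: "(U1, \<xi>1) \<in> atlas"
  note c1 = atlas_chart[OF ch]
  have "openin (top_of_set U1) (U1 \<inter> A)" by (rule openin_open_Int[OF A_open])
  from homeomorphism_imp_open_map[OF c1[THEN conjunct2, THEN conjunct2] this]
  have op: "open (\<xi>1 ` (U1 \<inter> A))" using c1 openin_open_trans by blast
  show "holo (\<xi>1 ` (U1 \<inter> A)) (T \<circ> inv_into U1 \<xi>1)"
    unfolding holo_def
  proof (intro conjI op ballI)
    fix y0 assume "y0 \<in> \<xi>1 ` (U1 \<inter> A)"
    then obtain x0 where x0: "x0 \<in> U1" "x0 \<in> A" "y0 = \<xi>1 x0" by auto
    have iy0: "inv_into U1 \<xi>1 y0 = x0"
      using homeomorphism_apply1[of U1 "\<xi>1 ` U1" \<xi>1 "inv_into U1 \<xi>1" x0] c1 x0 by simp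
    define w where "w = Tm x0"
    have w: "w \<noteq> 0" "\<phi> w x0 \<in> W" using Tm[OF x0(2)] by (auto simp: w_def)
    define N where "N = {y. y \<in> \<xi>1 ` U1 \<and> \<phi> w (inv_into U1 \<xi>1 y) \<in> U \<and> \<xi> (\<phi> w (inv_into U1 \<xi>1 y)) \<in> Y1}"
    have Nopen: "open N" unfolding N_def by (rule chart_map_open[OF ch chart(1) w(1) Y1_open])
    have y0N: "y0 \<in> N" using x0 iy0 w(2) by (auto simp: N_def W_def)
    define H1 where "H1 = (\<lambda>y. \<xi> (\<phi> w (inv_into U1 \<xi>1 y)))"
    obtain L where L: "(H1 has_derivative L) (at y0)" "\<forall>a v. L (a *s v) = a *s L v"
      using chart_map_deriv[OF ch chart(1) w(1)] y0N unfolding N_def H1_def by blast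
    have H1y0: "H1 y0 \<in> ball c \<delta>" using y0N Y1_delta by (auto simp: N_def H1_def)
    have d1: "((\<lambda>y. T0 (H1 y)) has_derivative (\<lambda>v. DT0 (H1 y0) (L v))) (at y0)"
      using diff_chain_at[OF L(1) T0_deriv[OF H1y0]] by (simp add: o_def)
    have iw: "inverse w \<noteq> 0" using w by simp
    have d2: "((\<lambda>y. \<psi> (inverse w) (T0 (H1 y))) has_derivative (\<lambda>v. \<psi> (inverse w) (DT0 (H1 y0) (L v)))) (at y0)"
      by (rule bounded_linear.has_derivative[OF psi_bl[OF iw] d1])
    have eq: "\<psi> (inverse w) (T0 (H1 y)) = (T \<circ> inv_into U1 \<xi>1) y" if "y \<in> N" for y
    proof -
      have "\<phi> w (inv_into U1 \<xi>1 y) \<in> W" using that by (simp add: N_def W_def)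
      from T_eq[OF w(1) this] show ?thesis by (simp add: H1_def)
    qed
    have "((T \<circ> inv_into U1 \<xi>1) has_derivative (\<lambda>v. \<psi> (inverse w) (DT0 (H1 y0) (L v)))) (at y0)"
      by (rule has_derivative_transform_within_open[OF d2 Nopen y0N eq])
    moreover have "\<psi> (inverse w) (DT0 (H1 y0) (L (a *s v))) = a *s \<psi> (inverse w) (DT0 (H1 y0) (L v))" for a v
      using L(2) DT0_cx[OF H1y0] psi_cx[OF iw] by simp
    ultimately show "\<exists>L. ((T \<circ> inv_into U1 \<xi>1) has_derivative L) (at y0) \<and> (\<forall>c v. L (c *s v) = c *s L v)"
      by blast
  qed
qed

lemma psi_isCont: "w \<noteq> 0 \<Longrightarrow> isCont (\<psi> w) u"
  by (rule linear_continuous_at[OF psi_bl])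

lemma Nw_open: "w \<noteq> 0 \<Longrightarrow> open {u. \<psi> w u \<in> B0}"
proof -
  assume w: "w \<noteq> 0"
  have "open (\<psi> w -` B0)" by (rule continuous_open_vimage[OF B0_open psi_isCont[OF w]])
  then show ?thesis by (simp add: vimage_def)
qed

lemma Sx_isCont:
  assumes w: "w \<noteq> 0" "\<psi> w u \<in> B0"
  shows "isCont (Sx w) u"
proof -
  have c1: "isCont (\<psi> w) u" by (rule psi_isCont[OF w(1)])
  have c2: "isCont gi (\<psi> w u)"
    using IFT(4,6) B0_Vp w(2) by (metis continuous_on_eq_continuous_at homeomorphism_def subsetD)
  have yU: "gi (\<psi> w u) \<in> \<xi> ` U" using gi_B0(1)[OF w(2)] Y1_U by blast
  have c3: "isCont (inv_into U \<xi>) (gi (\<psi> w u))"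
    using chart_props(2,3) yU by (metis continuous_on_eq_continuous_at homeomorphism_def)
  have c4: "isCont (\<phi> (inverse w)) x" for x
    using phi_cont[of "inverse w"] w(1) by (simp add: continuous_on_eq_continuous_at)
  have c12: "isCont (\<lambda>u. gi (\<psi> w u)) u" using continuous_at_compose[OF c1 c2] by (simp add: o_def)
  have c123: "isCont (\<lambda>u. inv_into U \<xi> (gi (\<psi> w u))) u"
    using continuous_at_compose[OF c12 c3] by (simp add: o_def)
  have "isCont (\<lambda>u. \<phi> (inverse w) (inv_into U \<xi> (gi (\<psi> w u)))) u"
    using continuous_at_compose[OF c123 c4] by (simp add: o_def)
  then show ?thesis unfolding Sx_def[abs_def] .
qed

lemma S_local: "\<exists>w N. w \<noteq> 0 \<and> open N \<and> u0 \<in> N \<and> (\<forall>u\<in>N. \<psi> w u \<in> B0 \<and> inv_into A T u = Sx w u)"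
proof -
  obtain w where w: "w \<noteq> 0" "\<psi> w u0 \<in> B0" using B0_reach by blast
  show ?thesis
    by (rule exI[of _ w], rule exI[of _ "{u. \<psi> w u \<in> B0}"]) (use w Nw_open Sx_props(3) in auto)
qed

lemma S_cont: "continuous_on UNIV (inv_into A T)"
proof (rule continuous_at_imp_continuous_on, intro ballI)
  fix u0 :: "complex^'n"
  obtain w N where wN: "w \<noteq> 0" "open N" "u0 \<in> N" "\<forall>u\<in>N. \<psi> w u \<in> B0 \<and> inv_into A T u = Sx w u"
    using S_local by blast
  have "isCont (Sx w) u0" using Sx_isCont wN by blast
  moreover have "\<forall>\<^sub>F u in nhds u0. inv_into A T u = Sx w u"
    using wN unfolding eventually_nhds by blast
  ultimately show "isCont (inv_into A T) u0" using isCont_cong by blast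
qed

lemma S_holo_to: "holo_to_mfd atlas UNIV (inv_into A T)"
  unfolding holo_to_mfd_def
proof (intro conjI open_UNIV S_cont ballI, clarify)
  fix U2 \<xi>2 assume ch: "(U2, \<xi>2) \<in> atlas"
  note c2 = atlas_chart[OF ch]
  have op: "open (UNIV \<inter> inv_into A T -` U2)"
    using open_vimage[OF _ S_cont] c2 by simp
  show "holo (UNIV \<inter> inv_into A T -` U2) (\<xi>2 \<circ> inv_into A T)"
    unfolding holo_def
  proof (intro conjI op ballI)
    fix u0 assume u0: "u0 \<in> UNIV \<inter> inv_into A T -` U2"
    obtain w N where wN: "w \<noteq> 0" "open N" "u0 \<in> N" "\<forall>u\<in>N. \<psi> w u \<in> B0 \<and> inv_into A T u = Sx w u"
      using S_local by blast
    have B: "\<psi> w u0 \<in> B0" using wN by auto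
    define y1 where "y1 = gi (\<psi> w u0)"
    have y1: "y1 \<in> \<xi> ` U" using gi_B0(1)[OF B] Y1_U by (auto simp: y1_def)
    have iw: "inverse w \<noteq> 0" using wN by simp
    have inU2: "\<phi> (inverse w) (inv_into U \<xi> y1) \<in> U2"
      using u0 wN by (auto simp: Sx_def y1_def)
    obtain L2 where L2: "((\<lambda>y. \<xi>2 (\<phi> (inverse w) (inv_into U \<xi> y))) has_derivative L2) (at y1)"
        "\<forall>a v. L2 (a *s v) = a *s L2 v"
      using chart_map_deriv[OF chart(1) ch iw y1 inU2] by blast
    obtain g' where g': "(gi has_derivative g') (at (\<psi> w u0))" "\<forall>a v. g' (a *s v) = a *s g' v"
      using IFT(7) B0_Vp B by blast
    have d0: "(\<psi> w has_derivative \<psi> w) (at u0)"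
      by (rule bounded_linear_imp_has_derivative[OF psi_bl[OF wN(1)]])
    have d1: "((\<lambda>u. gi (\<psi> w u)) has_derivative (\<lambda>v. g' (\<psi> w v))) (at u0)"
      using diff_chain_at[OF d0 g'(1)] by (simp add: o_def)
    have d2: "((\<lambda>u. \<xi>2 (\<phi> (inverse w) (inv_into U \<xi> (gi (\<psi> w u))))) has_derivative (\<lambda>v. L2 (g' (\<psi> w v)))) (at u0)"
      using diff_chain_at[OF d1 L2(1)[unfolded y1_def]] by (simp add: o_def)
    have eq: "\<xi>2 (\<phi> (inverse w) (inv_into U \<xi> (gi (\<psi> w u)))) = (\<xi>2 \<circ> inv_into A T) u" if "u \<in> N" for u
      using wN that by (simp add: Sx_def)
    have "((\<xi>2 \<circ> inv_into A T) has_derivative (\<lambda>v. L2 (g' (\<psi> w v)))) (at u0)"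
      by (rule has_derivative_transform_within_open[OF d2 wN(2,3) eq])
    moreover have "L2 (g' (\<psi> w (a *s v))) = a *s L2 (g' (\<psi> w v))" for a v
      using L2(2) g'(2) psi_cx[OF wN(1)] by simp
    ultimately show "\<exists>L. ((\<xi>2 \<circ> inv_into A T) has_derivative L) (at u0) \<and> (\<forall>c v. L (c *s v) = c *s L v)"
      by blast
  qed
qed

lemma main:
  "\<exists>A B T. open A \<and> p \<in> A \<and> (\<forall>z. z \<noteq> 0 \<longrightarrow> \<phi> z ` A \<subseteq> A) \<and>
           open B \<and> 0 \<in> B \<and> (\<forall>z. z \<noteq> 0 \<longrightarrow> derivative_action \<xi> U \<phi> p z ` B \<subseteq> B) \<and>
           biholomorphism atlas A B T \<and>
           (\<forall>z. z \<noteq> 0 \<longrightarrow> (\<forall>x\<in>A. derivative_action \<xi> U \<phi> p z (T x) = T (\<phi> z x)))"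
proof (intro exI[of _ A] exI[of _ UNIV] exI[of _ T] conjI allI impI ballI)
  show "open A" by (rule A_open)
  show "p \<in> A" by (rule p_A)
  show "\<phi> z ` A \<subseteq> A" if "z \<noteq> 0" for z using A_inv[OF that] by auto
  show "biholomorphism atlas A UNIV T"
    unfolding biholomorphism_def using T_bij T_holo_from S_holo_to by blast
  show "\<psi> z (T x) = T (\<phi> z x)" if "z \<noteq> 0" "x \<in> A" for z x by (rule T_equiv[OF that])
qed auto

end


theorem theoremB:
  fixes atlas :: "('m::t2_space set \<times> ('m \<Rightarrow> complex^'n)) set"
    and \<phi> :: "complex \<Rightarrow> 'm \<Rightarrow> 'm" and p :: 'm
    and U :: "'m set" and \<xi> :: "'m \<Rightarrow> complex^'n"
  assumes atlas: "complex_atlas atlas"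
    and action: "holomorphic_Cstar_action atlas \<phi>"
    and fixed: "\<forall>z. z \<noteq> 0 \<longrightarrow> \<phi> z p = p"
    and isolated: "\<exists>W. open W \<and> p \<in> W \<and>
                     (\<forall>q\<in>W. q \<noteq> p \<longrightarrow> (\<exists>z. z \<noteq> 0 \<and> \<phi> z q \<noteq> q))"
    and chart: "(U, \<xi>) \<in> atlas" "p \<in> U"
    and dicr: "dicritical (derivative_action \<xi> U \<phi> p)"
  shows "\<exists>A B T. open A \<and> p \<in> A \<and> (\<forall>z. z \<noteq> 0 \<longrightarrow> \<phi> z ` A \<subseteq> A) \<and>
           open B \<and> 0 \<in> B \<and> (\<forall>z. z \<noteq> 0 \<longrightarrow> derivative_action \<xi> U \<phi> p z ` B \<subseteq> B) \<and>
           biholomorphism atlas A B T \<and>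
           (\<forall>z. z \<noteq> 0 \<longrightarrow> (\<forall>x\<in>A. derivative_action \<xi> U \<phi> p z (T x) = T (\<phi> z x)))"
proof -
  obtain P and lam :: "'n \<Rightarrow> int" where P: "complex_linear P" "bij P"
      "(\<forall>j. lam j > 0) \<or> (\<forall>j. lam j < 0)"
      "\<forall>z v. z \<noteq> 0 \<longrightarrow> derivative_action \<xi> U \<phi> p z (P v) = P (\<chi> j. z powi (lam j) * v $ j)"
    using dicr unfolding dicritical_def by blast
  define pos where "pos = (\<forall>j. lam j > 0)"
  interpret L: lin_setup atlas \<phi> p U \<xi> P lam pos
  proof
    show "complex_atlas atlas" by (rule atlas)
    show "holomorphic_Cstar_action atlas \<phi>" by (rule action)
    show "\<And>z. z \<noteq> 0 \<Longrightarrow> \<phi> z p = p" using fixed by blast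
    show "(U, \<xi>) \<in> atlas" "p \<in> U" by (rule chart(1), rule chart(2))
    show "complex_linear P" "bij P" by (rule P(1), rule P(2))
    show "pos \<Longrightarrow> lam j > 0" for j by (simp add: pos_def)
    show "\<not> pos \<Longrightarrow> lam j < 0" for j using P(3) by (auto simp: pos_def)
    show "\<And>z v. z \<noteq> 0 \<Longrightarrow> derivative_action \<xi> U \<phi> p z (P v) = P (\<chi> j. z powi (lam j) * v $ j)"
      using P(4) by blast
  qed
  show ?thesis by (rule L.main)
qed

end
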